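(* For every $r=(r_1,r_2,r_3)\in\mathbb R_{>0}^3$ one has $\dim V_{\pi_{\omega_1}}^H=\dim V_{\pi_{\omega_2}}^H=1$, and $\pi_{\omega_1}$ and $\pi_{\omega_2}$ contribute to $\operatorname{Spec}(G/H,g_r)$ the eigenvalues $$\lambda^{\pi_{\omega_1}}(r)=\tfrac13r_1^2+\tfrac16r_2^2\qquad\text{and}\qquad \lambda^{\pi_{\omega_2}}(r)=\tfrac1{12}r_1^2+\tfrac16r_2^2+\tfrac34r_3^2,$$ with multiplicities $7$ and $14$ respectively.
   Context: Setting: $G\subset\mathrm{SO}(7)$ the compact connected group of type $G_2$, maximal torus $T$, $\mathfrak t_\mathbb C^*=\{\sum a_i\varepsilon_i:\sum a_i=0\}$, positive roots $\varepsilon_2-\varepsilon_3,\ \varepsilon_1-2\varepsilon_2+\varepsilon_3,\ \varepsilon_1-\varepsilon_2,\ \varepsilon_1+\varepsilon_2-2\varepsilon_3,\ \varepsilon_1-\varepsilon_3,\ 2\varepsilon_1-\varepsilon_2-\varepsilon_3$ (first two simple), root spaces $\mathfrak g_\alpha$. $H\cong\mathrm U(2)$ the connected subgroup with $\mathfrak h_\mathbb C=\mathfrak t_\mathbb C\oplus\mathfrak g_{\pm(\varepsilon_1+\varepsilon_2-2\varepsilon_3)}$, so $G/H\cong\mathrm{Gr}(2,7)=\mathrm{SO}(7)/(\mathrm{SO}(5)\times\mathrm{SO}(2))$. $K\cong\mathrm{SU}(3)$ the connected subgroup containing $T$ with roots $\pm(\varepsilon_1-2\varepsilon_2+\varepsilon_3),\pm(\varepsilon_1+\varepsilon_2-2\varepsilon_3),\pm(2\varepsilon_1-\varepsilon_2-\varepsilon_3)$.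 $\langle\cdot,\cdot\rangle=-B_\mathfrak g$ (negative Killing form). Real subspaces $\mathfrak p_1,\mathfrak p_2,\mathfrak p_3$ with $(\mathfrak p_1)_\mathbb C=\mathfrak g_{\pm(\varepsilon_1-\varepsilon_3)}\oplus\mathfrak g_{\pm(\varepsilon_2-\varepsilon_3)}$, $(\mathfrak p_2)_\mathbb C=\mathfrak g_{\pm(\varepsilon_1-\varepsilon_2)}$, $(\mathfrak p_3)_\mathbb C=\mathfrak g_{\pm(\varepsilon_1-2\varepsilon_2+\varepsilon_3)}\oplus\mathfrak g_{\pm(2\varepsilon_1-\varepsilon_2-\varepsilon_3)}$; $g_r$ ($r\in\mathbb R^3_{>0}$) is the $G$-invariant metric on $G/H$ induced by $\sum_h r_h^{-2}\langle\cdot,\cdot\rangle|_{\mathfrak p_h}$ on $\mathfrak p=\mathfrak p_1\oplus\mathfrak p_2\oplus\mathfrak p_3$. $\pi_\Lambda$ denotes the irreducible representation of $G$ with highest weight $\Lambda$; $\omega_1=\varepsilon_1-\varepsilon_3$ and $\omega_2=2\varepsilon_1-\varepsilon_2-\varepsilon_3$ are the fundamental weights ($\pi_{\omega_1}$ is the 7-dimensional standard representation, $\pi_{\omega_2}$ the 14-dimensional adjoint representation). Spectrum: for a $G$-invariant metric $g$ on $G/H$ given by an $\mathrm{Ad}(H)$-invariant inner product on $\mathfrak p$ with orthonormal basis $X_1,\dots,X_n$, $\operatorname{Spec}(G/H,g)$ is the union over irreducible representations $(\pi,V_\pi)$ of $G$ of the eigenvalues of the self-adjoint operator $-\sum_i\pi(X_i)^2$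 restricted to $V_\pi^H$ (the $H$-fixed vectors), each counted $\dim V_\pi$ times. "$\pi$ contributes the eigenvalue $\lambda$ with multiplicity $\dim V_\pi$" means $\dim V_\pi^H=1$ and this operator acts on $V_\pi^H$ by $\lambda$. *)

theory Defs
  imports "HOL-Analysis.Analysis"
begin

text \<open>Index set of R^7.  Coordinates: I0 = t (the real line), and
  (I1,I2), (I3,I4), (I5,I6) = (x_j, y_j) real coordinates of z_j = x_j + i y_j in C^3,
  so that R^7 = R + C^3.\<close>

datatype i7 = I0 | I1 | I2 | I3 | I4 | I5 | I6

lemma UNIV_i7: "(UNIV :: i7 set) = {I0, I1, I2, I3, I4, I5, I6}"
  by (auto intro: i7.exhaust)

instance i7 :: finite
proof
  show "finite (UNIV :: i7 set)" by (simp add: UNIV_i7)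
qed

type_synonym vec7 = "real^i7"
type_synonym mat7 = "real^i7^i7"

definition det3 :: "real \<Rightarrow> real \<Rightarrow> real \<Rightarrow> real \<Rightarrow> real \<Rightarrow> real \<Rightarrow> real \<Rightarrow> real \<Rightarrow> real \<Rightarrow> real" where
  "det3 a b c d e f g h k = a * (e * k - f * h) - b * (d * k - f * g) + c * (d * h - e * g)"

definition wedge3 :: "i7 \<Rightarrow> i7 \<Rightarrow> i7 \<Rightarrow> vec7 \<Rightarrow> vec7 \<Rightarrow> vec7 \<Rightarrow> real" where
  "wedge3 i j k u v w = det3 (u$i) (u$j) (u$k) (v$i) (v$j) (v$k) (w$i) (w$j) (w$k)"

text \<open>The G2 3-form  phi = dt /\ omega + Re(dz1 /\ dz2 /\ dz3),
  omega = sum_j dx_j /\ dy_j.\<close>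
definition phi3 :: "vec7 \<Rightarrow> vec7 \<Rightarrow> vec7 \<Rightarrow> real" where
  "phi3 u v w =
     wedge3 I0 I1 I2 u v w + wedge3 I0 I3 I4 u v w + wedge3 I0 I5 I6 u v w
   + wedge3 I1 I3 I5 u v w - wedge3 I1 I4 I6 u v w - wedge3 I2 I3 I6 u v w
   - wedge3 I2 I4 I5 u v w"

text \<open>g2 = Lie algebra of G = stabilizer of phi in SO(7).\<close>
definition g2 :: "mat7 set" where
  "g2 = {A. transpose A = - A \<and>
            (\<forall>u v w. phi3 (A *v u) v w + phi3 u (A *v v) w + phi3 u v (A *v w) = 0)}"

definition lbr :: "mat7 \<Rightarrow> mat7 \<Rightarrow> mat7" where
  "lbr X Y = X ** Y - Y ** X"

text \<open>Trace of a linear endomorphism f of a subspace S of a Euclidean space,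
  computed in an orthonormal basis of S (independent of the choice).\<close>
definition trace_on :: "'a::euclidean_space set \<Rightarrow> ('a \<Rightarrow> 'a) \<Rightarrow> real" where
  "trace_on S f = (SOME t. \<exists>B. B \<subseteq> S \<and> pairwise orthogonal B \<and> (\<forall>x\<in>B. norm x = 1) \<and>
                     independent B \<and> span B = S \<and> t = (\<Sum>b\<in>B. inner b (f b)))"

definition killing :: "mat7 \<Rightarrow> mat7 \<Rightarrow> real" where
  "killing X Y = trace_on g2 (\<lambda>Z. lbr X (lbr Y Z))"

definition kip :: "mat7 \<Rightarrow> mat7 \<Rightarrow> real" where
  "kip X Y = - killing X Y"

definition rotgen :: "real \<Rightarrow> real \<Rightarrow> real \<Rightarrow> mat7" where
  "rotgen th1 th2 th3 = (\<chi> i j.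
      if i = I1 \<and> j = I2 then - th1 else if i = I2 \<and> j = I1 then th1
      else if i = I3 \<and> j = I4 then - th2 else if i = I4 \<and> j = I3 then th2
      else if i = I5 \<and> j = I6 then - th3 else if i = I6 \<and> j = I5 then th3
      else 0)"

text \<open>Element of the Cartan subalgebra t on which eps_k takes the value i * e_k
  (for e1 + e2 + e3 = 0); the weights of C^3 are eps_2-eps_3, eps_3-eps_1, eps_1-eps_2.\<close>
definition tor :: "real \<Rightarrow> real \<Rightarrow> real \<Rightarrow> mat7" where
  "tor e1 e2 e3 = rotgen (e2 - e3) (e3 - e1) (e1 - e2)"

definition tset :: "mat7 set" where
  "tset = {tor e1 e2 e3 | e1 e2 e3. e1 + e2 + e3 = 0}"

text \<open>Real root space (g_alpha + g_{-alpha}) intersected with g2, for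
  alpha = a1 eps_1 + a2 eps_2 + a3 eps_3: since ad(H) acts on g_{+-alpha} by +- alpha(H),
  which is purely imaginary for H in t, this is the set of X in g2 with
  ad(H)^2 X = alpha(H)^2 X for all H in t.\<close>
definition rootsp :: "real \<Rightarrow> real \<Rightarrow> real \<Rightarrow> mat7 set" where
  "rootsp a1 a2 a3 = {X \<in> g2. \<forall>e1 e2 e3. e1 + e2 + e3 = 0 \<longrightarrow>
       lbr (tor e1 e2 e3) (lbr (tor e1 e2 e3) X) = - ((a1 * e1 + a2 * e2 + a3 * e3)^2) *\<^sub>R X}"

text \<open>Lie algebra of H = U(2): t + (g_{+-(eps1+eps2-2eps3)} \<inter> g).\<close>
definition hlie :: "mat7 set" where
  "hlie = {T + X | T X. T \<in> tset \<and> X \<in> rootsp 1 1 (-2)}"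

definition p1 :: "mat7 set" where
  "p1 = {X + Y | X Y. X \<in> rootsp 1 0 (-1) \<and> Y \<in> rootsp 0 1 (-1)}"

definition p2 :: "mat7 set" where
  "p2 = rootsp 1 (-1) 0"

definition p3 :: "mat7 set" where
  "p3 = {X + Y | X Y. X \<in> rootsp 1 (-2) 1 \<and> Y \<in> rootsp 2 (-1) (-1)}"

definition pspace :: "mat7 set" where
  "pspace = {X1 + X2 + X3 | X1 X2 X3. X1 \<in> p1 \<and> X2 \<in> p2 \<and> X3 \<in> p3}"

definition gr :: "real \<Rightarrow> real \<Rightarrow> real \<Rightarrow> mat7 \<Rightarrow> mat7 \<Rightarrow> real" where
  "gr r1 r2 r3 X Y = (THE c. \<exists>X1 X2 X3 Y1 Y2 Y3.
      X1 \<in> p1 \<and> X2 \<in> p2 \<and> X3 \<in> p3 \<and> Y1 \<in> p1 \<and> Y2 \<in> p2 \<and> Y3 \<in> p3 \<and>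
      X = X1 + X2 + X3 \<and> Y = Y1 + Y2 + Y3 \<and>
      c = kip X1 Y1 / r1^2 + kip X2 Y2 / r2^2 + kip X3 Y3 / r3^2)"

definition gr_onb :: "real \<Rightarrow> real \<Rightarrow> real \<Rightarrow> mat7 set \<Rightarrow> bool" where
  "gr_onb r1 r2 r3 B \<longleftrightarrow> finite B \<and> B \<subseteq> pspace \<and> span B = span pspace \<and>
     (\<forall>X\<in>B. \<forall>Y\<in>B. gr r1 r2 r3 X Y = (if X = Y then 1 else 0))"

text \<open>The operator  - sum_i pi(X_i)^2  for a representation pi (given by its
  differential on g2) and an orthonormal basis X_1..X_n of (p, g_r).\<close>
definition lap_op :: "real \<Rightarrow> real \<Rightarrow> real \<Rightarrow> (mat7 \<Rightarrow> 'v \<Rightarrow> 'v) \<Rightarrow> 'v \<Rightarrow> 'v::real_vector" where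
  "lap_op r1 r2 r3 \<pi> v = - (\<Sum>X\<in>(SOME B. gr_onb r1 r2 r3 B). \<pi> X (\<pi> X v))"

text \<open>H-fixed vectors in V (H connected, so these are the vectors killed by Lie(H)).\<close>
definition fixH :: "(mat7 \<Rightarrow> 'v \<Rightarrow> 'v) \<Rightarrow> 'v set \<Rightarrow> 'v::real_vector set" where
  "fixH \<pi> V = {v \<in> V. \<forall>X\<in>hlie. \<pi> X v = 0}"

text \<open>pi_{omega_1}: the standard 7-dimensional representation on R^7.\<close>
definition pi_std :: "mat7 \<Rightarrow> vec7 \<Rightarrow> vec7" where
  "pi_std X v = X *v v"

text \<open>pi_{omega_2}: the adjoint representation on g2.\<close>
definition pi_ad :: "mat7 \<Rightarrow> mat7 \<Rightarrow> mat7" where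
  "pi_ad X Y = lbr X Y"

end

theory Submission
  imports Defs
begin

lemma sum_i7: "sum f (UNIV::i7 set) = f I0 + f I1 + f I2 + f I3 + f I4 + f I5 + f I6"
  by (simp add: UNIV_i7 add.assoc)

lemma all_i7: "(\<forall>i::i7. P i) \<longleftrightarrow> P I0 \<and> P I1 \<and> P I2 \<and> P I3 \<and> P I4 \<and> P I5 \<and> P I6"
  by (metis i7.exhaust)

lemma mat7_eq: "(A::mat7) = B \<longleftrightarrow> (\<forall>i j. A$i$j = B$i$j)"
  by (simp add: vec_eq_iff)

definition sk :: "real \<Rightarrow> real \<Rightarrow> real \<Rightarrow> real \<Rightarrow> real \<Rightarrow> real \<Rightarrow> real \<Rightarrow> real \<Rightarrow> real \<Rightarrow> real \<Rightarrow> real \<Rightarrow> real \<Rightarrow> real \<Rightarrow> real \<Rightarrow> real \<Rightarrow> real \<Rightarrow> real \<Rightarrow> real \<Rightarrow> real \<Rightarrow> real \<Rightarrow> real \<Rightarrow> mat7" where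
  "sk x01 x02 x03 x04 x05 x06 x12 x13 x14 x15 x16 x23 x24 x25 x26 x34 x35 x36 x45 x46 x56 = (\<chi> i j. case i of I0 \<Rightarrow> (case j of I0 \<Rightarrow> 0 | I1 \<Rightarrow> x01 | I2 \<Rightarrow> x02 | I3 \<Rightarrow> x03 | I4 \<Rightarrow> x04 | I5 \<Rightarrow> x05 | I6 \<Rightarrow> x06) | I1 \<Rightarrow> (case j of I0 \<Rightarrow> - x01 | I1 \<Rightarrow> 0 | I2 \<Rightarrow> x12 | I3 \<Rightarrow> x13 | I4 \<Rightarrow> x14 | I5 \<Rightarrow> x15 | I6 \<Rightarrow> x16) | I2 \<Rightarrow> (case j of I0 \<Rightarrow> - x02 | I1 \<Rightarrow> - x12 | I2 \<Rightarrow> 0 | I3 \<Rightarrow> x23 | I4 \<Rightarrow> x24 | I5 \<Rightarrow> x25 | I6 \<Rightarrow> x26) | I3 \<Rightarrow> (case j of I0 \<Rightarrow> - x03 | I1 \<Rightarrow> - x13 | I2 \<Rightarrow> - x23 | I3 \<Rightarrow> 0 | I4 \<Rightarrow> x34 | I5 \<Rightarrow> x35 | I6 \<Rightarrow> x36) | I4 \<Rightarrow> (case j of I0 \<Rightarrow> - x04 | I1 \<Rightarrow> - x14 | I2 \<Rightarrow> - x24 | I3 \<Rightarrow> - x34 | I4 \<Rightarrow> 0 | I5 \<Rightarrow> x45 | I6 \<Rightarrow> x46) | I5 \<Rightarrow> (case j of I0 \<Rightarrow> - x05 | I1 \<Rightarrow> - x15 | I2 \<Rightarrow> - x25 | I3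 \<Rightarrow> - x35 | I4 \<Rightarrow> - x45 | I5 \<Rightarrow> 0 | I6 \<Rightarrow> x56) | I6 \<Rightarrow> (case j of I0 \<Rightarrow> - x06 | I1 \<Rightarrow> - x16 | I2 \<Rightarrow> - x26 | I3 \<Rightarrow> - x36 | I4 \<Rightarrow> - x46 | I5 \<Rightarrow> - x56 | I6 \<Rightarrow> 0))"

lemma sk_ent [simp]:
  "sk x01 x02 x03 x04 x05 x06 x12 x13 x14 x15 x16 x23 x24 x25 x26 x34 x35 x36 x45 x46 x56 $ I0 $ I0 = 0"
  "sk x01 x02 x03 x04 x05 x06 x12 x13 x14 x15 x16 x23 x24 x25 x26 x34 x35 x36 x45 x46 x56 $ I0 $ I1 = x01"
  "sk x01 x02 x03 x04 x05 x06 x12 x13 x14 x15 x16 x23 x24 x25 x26 x34 x35 x36 x45 x46 x56 $ I0 $ I2 = x02"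
  "sk x01 x02 x03 x04 x05 x06 x12 x13 x14 x15 x16 x23 x24 x25 x26 x34 x35 x36 x45 x46 x56 $ I0 $ I3 = x03"
  "sk x01 x02 x03 x04 x05 x06 x12 x13 x14 x15 x16 x23 x24 x25 x26 x34 x35 x36 x45 x46 x56 $ I0 $ I4 = x04"
  "sk x01 x02 x03 x04 x05 x06 x12 x13 x14 x15 x16 x23 x24 x25 x26 x34 x35 x36 x45 x46 x56 $ I0 $ I5 = x05"
  "sk x01 x02 x03 x04 x05 x06 x12 x13 x14 x15 x16 x23 x24 x25 x26 x34 x35 x36 x45 x46 x56 $ I0 $ I6 = x06"
  "sk x01 x02 x03 x04 x05 x06 x12 x13 x14 x15 x16 x23 x24 x25 x26 x34 x35 x36 x45 x46 x56 $ I1 $ I0 = - x01"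
  "sk x01 x02 x03 x04 x05 x06 x12 x13 x14 x15 x16 x23 x24 x25 x26 x34 x35 x36 x45 x46 x56 $ I1 $ I1 = 0"
  "sk x01 x02 x03 x04 x05 x06 x12 x13 x14 x15 x16 x23 x24 x25 x26 x34 x35 x36 x45 x46 x56 $ I1 $ I2 = x12"
  "sk x01 x02 x03 x04 x05 x06 x12 x13 x14 x15 x16 x23 x24 x25 x26 x34 x35 x36 x45 x46 x56 $ I1 $ I3 = x13"
  "sk x01 x02 x03 x04 x05 x06 x12 x13 x14 x15 x16 x23 x24 x25 x26 x34 x35 x36 x45 x46 x56 $ I1 $ I4 = x14"
  "sk x01 x02 x03 x04 x05 x06 x12 x13 x14 x15 x16 x23 x24 x25 x26 x34 x35 x36 x45 x46 x56 $ I1 $ I5 = x15"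
  "sk x01 x02 x03 x04 x05 x06 x12 x13 x14 x15 x16 x23 x24 x25 x26 x34 x35 x36 x45 x46 x56 $ I1 $ I6 = x16"
  "sk x01 x02 x03 x04 x05 x06 x12 x13 x14 x15 x16 x23 x24 x25 x26 x34 x35 x36 x45 x46 x56 $ I2 $ I0 = - x02"
  "sk x01 x02 x03 x04 x05 x06 x12 x13 x14 x15 x16 x23 x24 x25 x26 x34 x35 x36 x45 x46 x56 $ I2 $ I1 = - x12"
  "sk x01 x02 x03 x04 x05 x06 x12 x13 x14 x15 x16 x23 x24 x25 x26 x34 x35 x36 x45 x46 x56 $ I2 $ I2 = 0"
  "sk x01 x02 x03 x04 x05 x06 x12 x13 x14 x15 x16 x23 x24 x25 x26 x34 x35 x36 x45 x46 x56 $ I2 $ I3 = x23"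
  "sk x01 x02 x03 x04 x05 x06 x12 x13 x14 x15 x16 x23 x24 x25 x26 x34 x35 x36 x45 x46 x56 $ I2 $ I4 = x24"
  "sk x01 x02 x03 x04 x05 x06 x12 x13 x14 x15 x16 x23 x24 x25 x26 x34 x35 x36 x45 x46 x56 $ I2 $ I5 = x25"
  "sk x01 x02 x03 x04 x05 x06 x12 x13 x14 x15 x16 x23 x24 x25 x26 x34 x35 x36 x45 x46 x56 $ I2 $ I6 = x26"
  "sk x01 x02 x03 x04 x05 x06 x12 x13 x14 x15 x16 x23 x24 x25 x26 x34 x35 x36 x45 x46 x56 $ I3 $ I0 = - x03"
  "sk x01 x02 x03 x04 x05 x06 x12 x13 x14 x15 x16 x23 x24 x25 x26 x34 x35 x36 x45 x46 x56 $ I3 $ I1 = - x13"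
  "sk x01 x02 x03 x04 x05 x06 x12 x13 x14 x15 x16 x23 x24 x25 x26 x34 x35 x36 x45 x46 x56 $ I3 $ I2 = - x23"
  "sk x01 x02 x03 x04 x05 x06 x12 x13 x14 x15 x16 x23 x24 x25 x26 x34 x35 x36 x45 x46 x56 $ I3 $ I3 = 0"
  "sk x01 x02 x03 x04 x05 x06 x12 x13 x14 x15 x16 x23 x24 x25 x26 x34 x35 x36 x45 x46 x56 $ I3 $ I4 = x34"
  "sk x01 x02 x03 x04 x05 x06 x12 x13 x14 x15 x16 x23 x24 x25 x26 x34 x35 x36 x45 x46 x56 $ I3 $ I5 = x35"
  "sk x01 x02 x03 x04 x05 x06 x12 x13 x14 x15 x16 x23 x24 x25 x26 x34 x35 x36 x45 x46 x56 $ I3 $ I6 = x36"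
  "sk x01 x02 x03 x04 x05 x06 x12 x13 x14 x15 x16 x23 x24 x25 x26 x34 x35 x36 x45 x46 x56 $ I4 $ I0 = - x04"
  "sk x01 x02 x03 x04 x05 x06 x12 x13 x14 x15 x16 x23 x24 x25 x26 x34 x35 x36 x45 x46 x56 $ I4 $ I1 = - x14"
  "sk x01 x02 x03 x04 x05 x06 x12 x13 x14 x15 x16 x23 x24 x25 x26 x34 x35 x36 x45 x46 x56 $ I4 $ I2 = - x24"
  "sk x01 x02 x03 x04 x05 x06 x12 x13 x14 x15 x16 x23 x24 x25 x26 x34 x35 x36 x45 x46 x56 $ I4 $ I3 = - x34"
  "sk x01 x02 x03 x04 x05 x06 x12 x13 x14 x15 x16 x23 x24 x25 x26 x34 x35 x36 x45 x46 x56 $ I4 $ I4 = 0"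
  "sk x01 x02 x03 x04 x05 x06 x12 x13 x14 x15 x16 x23 x24 x25 x26 x34 x35 x36 x45 x46 x56 $ I4 $ I5 = x45"
  "sk x01 x02 x03 x04 x05 x06 x12 x13 x14 x15 x16 x23 x24 x25 x26 x34 x35 x36 x45 x46 x56 $ I4 $ I6 = x46"
  "sk x01 x02 x03 x04 x05 x06 x12 x13 x14 x15 x16 x23 x24 x25 x26 x34 x35 x36 x45 x46 x56 $ I5 $ I0 = - x05"
  "sk x01 x02 x03 x04 x05 x06 x12 x13 x14 x15 x16 x23 x24 x25 x26 x34 x35 x36 x45 x46 x56 $ I5 $ I1 = - x15"
  "sk x01 x02 x03 x04 x05 x06 x12 x13 x14 x15 x16 x23 x24 x25 x26 x34 x35 x36 x45 x46 x56 $ I5 $ I2 = - x25"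
  "sk x01 x02 x03 x04 x05 x06 x12 x13 x14 x15 x16 x23 x24 x25 x26 x34 x35 x36 x45 x46 x56 $ I5 $ I3 = - x35"
  "sk x01 x02 x03 x04 x05 x06 x12 x13 x14 x15 x16 x23 x24 x25 x26 x34 x35 x36 x45 x46 x56 $ I5 $ I4 = - x45"
  "sk x01 x02 x03 x04 x05 x06 x12 x13 x14 x15 x16 x23 x24 x25 x26 x34 x35 x36 x45 x46 x56 $ I5 $ I5 = 0"
  "sk x01 x02 x03 x04 x05 x06 x12 x13 x14 x15 x16 x23 x24 x25 x26 x34 x35 x36 x45 x46 x56 $ I5 $ I6 = x56"
  "sk x01 x02 x03 x04 x05 x06 x12 x13 x14 x15 x16 x23 x24 x25 x26 x34 x35 x36 x45 x46 x56 $ I6 $ I0 = - x06"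
  "sk x01 x02 x03 x04 x05 x06 x12 x13 x14 x15 x16 x23 x24 x25 x26 x34 x35 x36 x45 x46 x56 $ I6 $ I1 = - x16"
  "sk x01 x02 x03 x04 x05 x06 x12 x13 x14 x15 x16 x23 x24 x25 x26 x34 x35 x36 x45 x46 x56 $ I6 $ I2 = - x26"
  "sk x01 x02 x03 x04 x05 x06 x12 x13 x14 x15 x16 x23 x24 x25 x26 x34 x35 x36 x45 x46 x56 $ I6 $ I3 = - x36"
  "sk x01 x02 x03 x04 x05 x06 x12 x13 x14 x15 x16 x23 x24 x25 x26 x34 x35 x36 x45 x46 x56 $ I6 $ I4 = - x46"
  "sk x01 x02 x03 x04 x05 x06 x12 x13 x14 x15 x16 x23 x24 x25 x26 x34 x35 x36 x45 x46 x56 $ I6 $ I5 = - x56"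
  "sk x01 x02 x03 x04 x05 x06 x12 x13 x14 x15 x16 x23 x24 x25 x26 x34 x35 x36 x45 x46 x56 $ I6 $ I6 = 0"
  by (simp_all add: sk_def)

lemma lbr_sk: "lbr (sk x01 x02 x03 x04 x05 x06 x12 x13 x14 x15 x16 x23 x24 x25 x26 x34 x35 x36 x45 x46 x56) (sk y01 y02 y03 y04 y05 y06 y12 y13 y14 y15 y16 y23 y24 y25 y26 y34 y35 y36 y45 y46 y56) = sk (-x02*y12 - x03*y13 - x04*y14 - x05*y15 - x06*y16 + x12*y02 + x13*y03 + x14*y04 + x15*y05 + x16*y06) (x01*y12 - x03*y23 - x04*y24 - x05*y25 - x06*y26 - x12*y01 + x23*y03 + x24*y04 + x25*y05 + x26*y06) (x01*y13 + x02*y23 - x04*y34 - x05*y35 - x06*y36 - x13*y01 - x23*y02 + x34*y04 + x35*y05 + x36*y06) (x01*y14 + x02*y24 + x03*y34 - x05*y45 - x06*y46 - x14*y01 - x24*y02 - x34*y03 + x45*y05 + x46*y06) (x01*y15 + x02*y25 + x03*y35 + x04*y45 - x06*y56 - x15*y01 - x25*y02 - x35*y03 - x45*y04 + x56*y06) (x01*y16 + x02*y26 + x03*y36 + x04*y46 + x05*y56 - x16*y01 - x26*y02 - x36*y03 - x46*y04 - x56*y05) (-x01*y02 + x02*y01 - x13*y23 - x14*y24 - x15*y25 - x16*y26 + x23*y13 + x24*y14 + x25*y15 + x26*y16) (-x01*y03 + x03*y01 + x12*y23 - x14*y34 - x15*y35 - x16*y36 - x23*y12 + x34*y14 + x35*y15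 + x36*y16) (-x01*y04 + x04*y01 + x12*y24 + x13*y34 - x15*y45 - x16*y46 - x24*y12 - x34*y13 + x45*y15 + x46*y16) (-x01*y05 + x05*y01 + x12*y25 + x13*y35 + x14*y45 - x16*y56 - x25*y12 - x35*y13 - x45*y14 + x56*y16) (-x01*y06 + x06*y01 + x12*y26 + x13*y36 + x14*y46 + x15*y56 - x26*y12 - x36*y13 - x46*y14 - x56*y15) (-x02*y03 + x03*y02 - x12*y13 + x13*y12 - x24*y34 - x25*y35 - x26*y36 + x34*y24 + x35*y25 + x36*y26) (-x02*y04 + x04*y02 - x12*y14 + x14*y12 + x23*y34 - x25*y45 - x26*y46 - x34*y23 + x45*y25 + x46*y26) (-x02*y05 + x05*y02 - x12*y15 + x15*y12 + x23*y35 + x24*y45 - x26*y56 - x35*y23 - x45*y24 + x56*y26) (-x02*y06 + x06*y02 - x12*y16 + x16*y12 + x23*y36 + x24*y46 + x25*y56 - x36*y23 - x46*y24 - x56*y25) (-x03*y04 + x04*y03 - x13*y14 + x14*y13 - x23*y24 + x24*y23 - x35*y45 - x36*y46 + x45*y35 + x46*y36) (-x03*y05 + x05*y03 - x13*y15 + x15*y13 - x23*y25 + x25*y23 + x34*y45 - x36*y56 - x45*y34 + x56*y36) (-x03*y06 + x06*y03 - x13*y16 + x16*y13 - x23*y26 + x26*y23 + x34*y46 + x35*y56 - x46*y34 - x56*y35) (-x04*y05 + x05*y04 - x14*y15 + x15*y14 - x24*y25 + x25*y24 - x34*y35 + x35*y34 - x46*y56 + x56*y46) (-x04*y06 + x06*y04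 - x14*y16 + x16*y14 - x24*y26 + x26*y24 - x34*y36 + x36*y34 + x45*y56 - x56*y45) (-x05*y06 + x06*y05 - x15*y16 + x16*y15 - x25*y26 + x26*y25 - x35*y36 + x36*y35 - x45*y46 + x46*y45)"
  unfolding lbr_def mat7_eq all_i7 by (simp add: matrix_matrix_mult_def sum_i7 algebra_simps)


lemma orth_expand:
  fixes C :: "'a::real_inner set"
  assumes fin: "finite C" and po: "pairwise orthogonal C" and nz: "0 \<notin> C" and xs: "x \<in> span C"
  shows "x = (\<Sum>c\<in>C. (inner x c / inner c c) *\<^sub>R c)"
proof -
  obtain u where u: "x = (\<Sum>c\<in>C. u c *\<^sub>R c)" using xs span_finite[OF fin] by auto
  have ud: "u d = inner x d / inner d d" if d: "d \<in> C" for d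
  proof -
    have "inner x d = (\<Sum>c\<in>C. u c * inner c d)" by (simp add: u inner_sum_left)
    also have "\<dots> = (\<Sum>c\<in>C. if c = d then u d * inner d d else 0)"
      by (rule sum.cong) (use po d in \<open>auto simp: pairwise_def orthogonal_def\<close>)
    also have "\<dots> = u d * inner d d" using fin d by simp
    finally have "inner x d = u d * inner d d" .
    moreover have "inner d d \<noteq> 0" using nz d by auto
    ultimately show ?thesis by simp
  qed
  show ?thesis by (subst u) (rule sum.cong, simp_all add: ud)
qed

lemma trace_on_orth:
  fixes S C :: "'a::euclidean_space set"
  assumes fin: "finite C" and sub: "C \<subseteq> S" and po: "pairwise orthogonal C" and nz: "0 \<notin> C"
    and sp: "span C = S" and lf: "linear f"
  shows "trace_on S f = (\<Sum>c\<in>C. inner c (f c) / inner c c)"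
proof -
  let ?P = "\<lambda>t B. B \<subseteq> S \<and> pairwise orthogonal B \<and> (\<forall>x\<in>B. norm x = 1) \<and>
                     independent B \<and> span B = S \<and> t = (\<Sum>b\<in>B. inner b (f b))"
  have expC: "x = (\<Sum>c\<in>C. (inner x c / inner c c) *\<^sub>R c)" if "x \<in> S" for x
    using orth_expand[OF fin po nz] that sp by auto
  have uniq: "t = (\<Sum>c\<in>C. inner c (f c) / inner c c)" if "?P t B" for t B
  proof -
    have BS: "B \<subseteq> S" by (insert that, elim conjE, assumption)
    have pB: "pairwise orthogonal B" by (insert that, elim conjE, assumption)
    have nB: "\<forall>x\<in>B. norm x = 1" by (insert that, elim conjE, assumption)
    have iB: "independent B" by (insert that, elim conjE, assumption)
    have sB: "span B = S" by (insert that, elim conjE, assumption)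
    have t: "t = (\<Sum>b\<in>B. inner b (f b))" by (insert that, elim conjE, assumption)
    have finB: "finite B" using iB by (rule finiteI_independent)
    have nzB: "0 \<notin> B" using nB by (metis norm_zero zero_neq_one)
    have ib: "inner b b = 1" if "b \<in> B" for b
    proof -
      have "norm b = 1" using nB that by blast
      then show ?thesis by (metis power2_norm_eq_inner one_power2)
    qed
    have expB: "x = (\<Sum>b\<in>B. inner x b *\<^sub>R b)" if "x \<in> S" for x
    proof -
      have "x = (\<Sum>b\<in>B. (inner x b / inner b b) *\<^sub>R b)"
        using orth_expand[OF finB pB nzB] that sB by auto
      also have "\<dots> = (\<Sum>b\<in>B. inner x b *\<^sub>R b)" by (rule sum.cong) (simp_all add: ib)
      finally show ?thesis .
    qed
    have "t = (\<Sum>b\<in>B. inner b (f b))" by (rule t)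
    also have "\<dots> = (\<Sum>b\<in>B. \<Sum>c\<in>C. (inner b c / inner c c) * inner b (f c))"
    proof (rule sum.cong[OF refl])
      fix b assume "b \<in> B"
      then have "b \<in> S" using BS by auto
      then have "f b = f (\<Sum>c\<in>C. (inner b c / inner c c) *\<^sub>R c)" using expC by metis
      also have "\<dots> = (\<Sum>c\<in>C. (inner b c / inner c c) *\<^sub>R f c)"
        by (simp add: linear_sum[OF lf] linear_scale[OF lf])
      finally show "inner b (f b) = (\<Sum>c\<in>C. (inner b c / inner c c) * inner b (f c))"
        by (simp add: inner_sum_right)
    qed
    also have "\<dots> = (\<Sum>c\<in>C. \<Sum>b\<in>B. (inner b c / inner c c) * inner b (f c))"
      by (rule sum.swap)
    also have "\<dots> = (\<Sum>c\<in>C. inner c (f c) / inner c c)"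
    proof (rule sum.cong[OF refl])
      fix c assume "c \<in> C"
      then have "c = (\<Sum>b\<in>B. inner c b *\<^sub>R b)" using expB sub by auto
      then have "inner c (f c) = inner (\<Sum>b\<in>B. inner c b *\<^sub>R b) (f c)" by simp
      also have "\<dots> = (\<Sum>b\<in>B. inner c b * inner b (f c))" by (simp add: inner_sum_left)
      finally have "inner c (f c) / inner c c = (\<Sum>b\<in>B. inner c b * inner b (f c)) / inner c c" by simp
      also have "\<dots> = (\<Sum>b\<in>B. (inner b c / inner c c) * inner b (f c))"
        by (simp add: sum_divide_distrib inner_commute)
      finally show "(\<Sum>b\<in>B. (inner b c / inner c c) * inner b (f c)) = inner c (f c) / inner c c" by simp
    qed
    finally show ?thesis .
  qed
  have ex: "\<exists>t B. ?P t B"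
  proof -
    define nm where "nm = (\<lambda>c::'a. c /\<^sub>R norm c)"
    let ?B = "nm ` C"
    have cnz: "c \<noteq> 0" if "c \<in> C" for c using nz that by auto
    have nn: "norm (nm c) = 1" if "c \<in> C" for c using cnz[OF that] by (simp add: nm_def)
    have inj: "inj_on nm C"
    proof (rule inj_onI)
      fix c d assume c: "c \<in> C" and d: "d \<in> C" and e: "nm c = nm d"
      show "c = d"
      proof (rule ccontr)
        assume "c \<noteq> d"
        then have "inner c d = 0" using po c d by (auto simp: pairwise_def orthogonal_def)
        then have "inner (nm c) (nm d) = 0" by (simp add: nm_def)
        then have "inner (nm c) (nm c) = 0" using e by simp
        then show False using nn[OF c] by simp
      qed
    qed
    have BS: "?B \<subseteq> S" using sub sp by (auto simp: nm_def intro: span_scale span_base)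
    have pB: "pairwise orthogonal ?B"
    proof (rule pairwiseI)
      fix x y assume "x \<in> ?B" "y \<in> ?B" "x \<noteq> y"
      then obtain c d where "c \<in> C" "d \<in> C" "x = nm c" "y = nm d" "c \<noteq> d" by auto
      then show "orthogonal x y" using po by (auto simp: pairwise_def orthogonal_def nm_def)
    qed
    have nB: "\<forall>x\<in>?B. norm x = 1" using nn by auto
    have nzB: "0 \<notin> ?B" using nB by (metis norm_zero zero_neq_one)
    have iB: "independent ?B" by (rule pairwise_orthogonal_independent[OF pB nzB])
    have sB: "span ?B = S"
    proof -
      have "span ?B \<subseteq> span C" using BS sp by (metis span_minimal subspace_span)
      moreover have "C \<subseteq> span ?B"
      proof
        fix c assume c: "c \<in> C"
        have "c = norm c *\<^sub>R nm c" using cnz[OF c] by (simp add: nm_def)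
        moreover have "nm c \<in> span ?B" using c by (auto intro: span_base)
        ultimately show "c \<in> span ?B" by (metis span_scale)
      qed
      then have "span C \<subseteq> span ?B" by (simp add: span_minimal)
      ultimately show ?thesis using sp by auto
    qed
    have "(\<Sum>b\<in>?B. inner b (f b)) = (\<Sum>c\<in>C. inner (nm c) (f (nm c)))"
      by (rule sum.reindex[OF inj, unfolded comp_def])
    also have "\<dots> = (\<Sum>c\<in>C. inner c (f c) / inner c c)"
    proof (rule sum.cong[OF refl])
      fix c assume c: "c \<in> C"
      have "inner (nm c) (f (nm c)) = inverse (norm c) * (inverse (norm c) * inner c (f c))"
        by (simp add: nm_def linear_scale[OF lf])
      also have "\<dots> = inner c (f c) / (norm c * norm c)"
        by (simp add: divide_inverse inverse_mult_distrib)
      also have "\<dots> = inner c (f c) / inner c c" by (simp add: power2_norm_eq_inner[symmetric] power2_eq_square)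
      finally show "inner (nm c) (f (nm c)) = inner c (f c) / inner c c" .
    qed
    finally show ?thesis using BS pB nB iB sB by blast
  qed
  have "\<exists>B. ?P (trace_on S f) B" unfolding trace_on_def by (rule someI_ex[OF ex])
  then obtain B where "?P (trace_on S f) B" by blast
  then show ?thesis by (rule uniq)
qed



lemma sk_add: "sk x01 x02 x03 x04 x05 x06 x12 x13 x14 x15 x16 x23 x24 x25 x26 x34 x35 x36 x45 x46 x56 + sk y01 y02 y03 y04 y05 y06 y12 y13 y14 y15 y16 y23 y24 y25 y26 y34 y35 y36 y45 y46 y56 = (sk (x01 + y01) (x02 + y02) (x03 + y03) (x04 + y04) (x05 + y05) (x06 + y06) (x12 + y12) (x13 + y13) (x14 + y14) (x15 + y15) (x16 + y16) (x23 + y23) (x24 + y24) (x25 + y25) (x26 + y26) (x34 + y34) (x35 + y35) (x36 + y36) (x45 + y45) (x46 + y46) (x56 + y56))"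
  unfolding mat7_eq all_i7 by simp

lemma sk_diff: "sk x01 x02 x03 x04 x05 x06 x12 x13 x14 x15 x16 x23 x24 x25 x26 x34 x35 x36 x45 x46 x56 - sk y01 y02 y03 y04 y05 y06 y12 y13 y14 y15 y16 y23 y24 y25 y26 y34 y35 y36 y45 y46 y56 = (sk (x01 - y01) (x02 - y02) (x03 - y03) (x04 - y04) (x05 - y05) (x06 - y06) (x12 - y12) (x13 - y13) (x14 - y14) (x15 - y15) (x16 - y16) (x23 - y23) (x24 - y24) (x25 - y25) (x26 - y26) (x34 - y34) (x35 - y35) (x36 - y36) (x45 - y45) (x46 - y46) (x56 - y56))"
  unfolding mat7_eq all_i7 by simp

lemma sk_scale: "c *\<^sub>R sk x01 x02 x03 x04 x05 x06 x12 x13 x14 x15 x16 x23 x24 x25 x26 x34 x35 x36 x45 x46 x56 = (sk (c * x01) (c * x02) (c * x03) (c * x04) (c * x05) (c * x06) (c * x12) (c * x13) (c * x14) (c * x15) (c * x16) (c * x23) (c * x24) (c * x25) (c * x26) (c * x34) (c * x35) (c * x36) (c * x45) (c * x46) (c * x56))"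
  unfolding mat7_eq all_i7 by simp

lemma sk_zero: "(0::mat7) = sk 0 0 0 0 0 0 0 0 0 0 0 0 0 0 0 0 0 0 0 0 0"
  unfolding mat7_eq all_i7 by simp

lemma sk_eq: "sk x01 x02 x03 x04 x05 x06 x12 x13 x14 x15 x16 x23 x24 x25 x26 x34 x35 x36 x45 x46 x56 = sk y01 y02 y03 y04 y05 y06 y12 y13 y14 y15 y16 y23 y24 y25 y26 y34 y35 y36 y45 y46 y56 \<longleftrightarrow> x01 = y01 \<and> x02 = y02 \<and> x03 = y03 \<and> x04 = y04 \<and> x05 = y05 \<and> x06 = y06 \<and> x12 = y12 \<and> x13 = y13 \<and> x14 = y14 \<and> x15 = y15 \<and> x16 = y16 \<and> x23 = y23 \<and> x24 = y24 \<and> x25 = y25 \<and> x26 = y26 \<and> x34 = y34 \<and> x35 = y35 \<and> x36 = y36 \<and> x45 = y45 \<and> x46 = y46 \<and> x56 = y56"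
  unfolding mat7_eq all_i7 by auto

lemma inner_sk: "inner (sk x01 x02 x03 x04 x05 x06 x12 x13 x14 x15 x16 x23 x24 x25 x26 x34 x35 x36 x45 x46 x56) (sk y01 y02 y03 y04 y05 y06 y12 y13 y14 y15 y16 y23 y24 y25 y26 y34 y35 y36 y45 y46 y56) = 2 * (x01 * y01 + x02 * y02 + x03 * y03 + x04 * y04 + x05 * y05 + x06 * y06 + x12 * y12 + x13 * y13 + x14 * y14 + x15 * y15 + x16 * y16 + x23 * y23 + x24 * y24 + x25 * y25 + x26 * y26 + x34 * y34 + x35 * y35 + x36 * y36 + x45 * y45 + x46 * y46 + x56 * y56)"
  by (simp add: inner_vec_def sum_i7 algebra_simps)

lemma skv [simp]:
  "(sk x01 x02 x03 x04 x05 x06 x12 x13 x14 x15 x16 x23 x24 x25 x26 x34 x35 x36 x45 x46 x56 *v v) $ I0 = x01 * v$I1 + x02 * v$I2 + x03 * v$I3 + x04 * v$I4 + x05 * v$I5 + x06 * v$I6"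
  "(sk x01 x02 x03 x04 x05 x06 x12 x13 x14 x15 x16 x23 x24 x25 x26 x34 x35 x36 x45 x46 x56 *v v) $ I1 = - x01 * v$I0 + x12 * v$I2 + x13 * v$I3 + x14 * v$I4 + x15 * v$I5 + x16 * v$I6"
  "(sk x01 x02 x03 x04 x05 x06 x12 x13 x14 x15 x16 x23 x24 x25 x26 x34 x35 x36 x45 x46 x56 *v v) $ I2 = - x02 * v$I0 - x12 * v$I1 + x23 * v$I3 + x24 * v$I4 + x25 * v$I5 + x26 * v$I6"
  "(sk x01 x02 x03 x04 x05 x06 x12 x13 x14 x15 x16 x23 x24 x25 x26 x34 x35 x36 x45 x46 x56 *v v) $ I3 = - x03 * v$I0 - x13 * v$I1 - x23 * v$I2 + x34 * v$I4 + x35 * v$I5 + x36 * v$I6"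
  "(sk x01 x02 x03 x04 x05 x06 x12 x13 x14 x15 x16 x23 x24 x25 x26 x34 x35 x36 x45 x46 x56 *v v) $ I4 = - x04 * v$I0 - x14 * v$I1 - x24 * v$I2 - x34 * v$I3 + x45 * v$I5 + x46 * v$I6"
  "(sk x01 x02 x03 x04 x05 x06 x12 x13 x14 x15 x16 x23 x24 x25 x26 x34 x35 x36 x45 x46 x56 *v v) $ I5 = - x05 * v$I0 - x15 * v$I1 - x25 * v$I2 - x35 * v$I3 - x45 * v$I4 + x56 * v$I6"
  "(sk x01 x02 x03 x04 x05 x06 x12 x13 x14 x15 x16 x23 x24 x25 x26 x34 x35 x36 x45 x46 x56 *v v) $ I6 = - x06 * v$I0 - x16 * v$I1 - x26 * v$I2 - x36 * v$I3 - x46 * v$I4 - x56 * v$I5"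
  by (simp_all add: matrix_vector_mult_def sum_i7)

lemma skew_sk: assumes "transpose A = - (A::mat7)" shows "A = sk (A$I0$I1) (A$I0$I2) (A$I0$I3) (A$I0$I4) (A$I0$I5) (A$I0$I6) (A$I1$I2) (A$I1$I3) (A$I1$I4) (A$I1$I5) (A$I1$I6) (A$I2$I3) (A$I2$I4) (A$I2$I5) (A$I2$I6) (A$I3$I4) (A$I3$I5) (A$I3$I6) (A$I4$I5) (A$I4$I6) (A$I5$I6)"
proof -
  have h: "A$j$i = - A$i$j" for i j
  proof -
    have "transpose A $ i $ j = (- A) $ i $ j" using assms by simp
    then show ?thesis by (simp add: transpose_def)
  qed
  have d: "A$i$i = 0" for i using h[of i i] by linarith
  show ?thesis unfolding mat7_eq all_i7 by (simp add: d h[of I0 I1] h[of I0 I2] h[of I0 I3] h[of I0 I4] h[of I0 I5] h[of I0 I6] h[of I1 I2] h[of I1 I3] h[of I1 I4] h[of I1 I5] h[of I1 I6] h[of I2 I3] h[of I2 I4] h[of I2 I5] h[of I2 I6] h[of I3 I4] h[of I3 I5] h[of I3 I6] h[of I4 I5] h[of I4 I6] h[of I5 I6])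
qed

datatype gi = Ga1 | Ga2 | Ga3 | Ga4 | Gb1 | Gb2 | Gc1 | Gc2 | Gc3 | Gc4 | Gh1 | Gh2 | Gt1 | Gt2

lemma UNIV_gi: "(UNIV :: gi set) = {Ga1, Ga2, Ga3, Ga4, Gb1, Gb2, Gc1, Gc2, Gc3, Gc4, Gh1, Gh2, Gt1, Gt2}"
  by (rule set_eqI, case_tac x, simp_all)

lemma sum_gi: "sum f (UNIV::gi set) = f Ga1 + f Ga2 + f Ga3 + f Ga4 + f Gb1 + f Gb2 + f Gc1 + f Gc2 + f Gc3 + f Gc4 + f Gh1 + f Gh2 + f Gt1 + f Gt2"
  by (simp add: UNIV_gi add.assoc)

lemma all_gi: "(\<forall>k::gi. Q k) \<longleftrightarrow> Q Ga1 \<and> Q Ga2 \<and> Q Ga3 \<and> Q Ga4 \<and> Q Gb1 \<and> Q Gb2 \<and> Q Gc1 \<and> Q Gc2 \<and> Q Gc3 \<and> Q Gc4 \<and> Q Gh1 \<and> Q Gh2 \<and> Q Gt1 \<and> Q Gt2"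
  by (subst ball_UNIV[symmetric], subst UNIV_gi, simp)

definition E :: "gi \<Rightarrow> mat7" where
  "E k = (case k of Ga1 \<Rightarrow> (sk 0 0 (- 2) 0 0 0 0 0 0 0 1 0 0 1 0 0 0 0 0 0 0) | Ga2 \<Rightarrow> (sk 0 0 0 2 0 0 0 0 0 (- 1) 0 0 0 0 1 0 0 0 0 0 0) | Ga3 \<Rightarrow> (sk 2 0 0 0 0 0 0 0 0 0 0 0 0 0 0 0 0 1 1 0 0) | Ga4 \<Rightarrow> (sk 0 (- 2) 0 0 0 0 0 0 0 0 0 0 0 0 0 0 (- 1) 0 0 1 0) | Gb1 \<Rightarrow> (sk 0 0 0 0 2 0 0 0 1 0 0 1 0 0 0 0 0 0 0 0 0) | Gb2 \<Rightarrow> (sk 0 0 0 0 0 (- 2) 0 (- 1) 0 0 0 0 1 0 0 0 0 0 0 0 0) | Gc1 \<Rightarrow> (sk 0 0 0 0 0 0 0 0 0 0 (- 1) 0 0 1 0 0 0 0 0 0 0) | Gc2 \<Rightarrow> (sk 0 0 0 0 0 0 0 0 0 1 0 0 0 0 1 0 0 0 0 0 0) | Gc3 \<Rightarrow> (sk 0 0 0 0 0 0 0 0 0 0 0 0 0 0 0 0 0 (- 1) 1 0 0) | Gc4 \<Rightarrow> (sk 0 0 0 0 0 0 0 0 0 0 0 0 0 0 0 0 1 0 0 1 0) | Gh1 \<Rightarrow> (sk 0 0 0 0 0 0 0 0 (- 1) 0 0 1 0 0 0 0 0 0 0 0 0) | Gh2 \<Rightarrow> (sk 0 0 0 0 0 0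 0 1 0 0 0 0 1 0 0 0 0 0 0 0 0) | Gt1 \<Rightarrow> (sk 0 0 0 0 0 0 (- 1) 0 0 0 0 0 0 0 0 1 0 0 0 0 0) | Gt2 \<Rightarrow> (sk 0 0 0 0 0 0 (- 1) 0 0 0 0 0 0 0 0 (- 1) 0 0 0 0 2))"

lemma E_Ga1: "E Ga1 = (sk 0 0 (- 2) 0 0 0 0 0 0 0 1 0 0 1 0 0 0 0 0 0 0)" by (simp add: E_def)
lemma E_Ga2: "E Ga2 = (sk 0 0 0 2 0 0 0 0 0 (- 1) 0 0 0 0 1 0 0 0 0 0 0)" by (simp add: E_def)
lemma E_Ga3: "E Ga3 = (sk 2 0 0 0 0 0 0 0 0 0 0 0 0 0 0 0 0 1 1 0 0)" by (simp add: E_def)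
lemma E_Ga4: "E Ga4 = (sk 0 (- 2) 0 0 0 0 0 0 0 0 0 0 0 0 0 0 (- 1) 0 0 1 0)" by (simp add: E_def)
lemma E_Gb1: "E Gb1 = (sk 0 0 0 0 2 0 0 0 1 0 0 1 0 0 0 0 0 0 0 0 0)" by (simp add: E_def)
lemma E_Gb2: "E Gb2 = (sk 0 0 0 0 0 (- 2) 0 (- 1) 0 0 0 0 1 0 0 0 0 0 0 0 0)" by (simp add: E_def)
lemma E_Gc1: "E Gc1 = (sk 0 0 0 0 0 0 0 0 0 0 (- 1) 0 0 1 0 0 0 0 0 0 0)" by (simp add: E_def)
lemma E_Gc2: "E Gc2 = (sk 0 0 0 0 0 0 0 0 0 1 0 0 0 0 1 0 0 0 0 0 0)" by (simp add: E_def)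
lemma E_Gc3: "E Gc3 = (sk 0 0 0 0 0 0 0 0 0 0 0 0 0 0 0 0 0 (- 1) 1 0 0)" by (simp add: E_def)
lemma E_Gc4: "E Gc4 = (sk 0 0 0 0 0 0 0 0 0 0 0 0 0 0 0 0 1 0 0 1 0)" by (simp add: E_def)
lemma E_Gh1: "E Gh1 = (sk 0 0 0 0 0 0 0 0 (- 1) 0 0 1 0 0 0 0 0 0 0 0 0)" by (simp add: E_def)
lemma E_Gh2: "E Gh2 = (sk 0 0 0 0 0 0 0 1 0 0 0 0 1 0 0 0 0 0 0 0 0)" by (simp add: E_def)
lemma E_Gt1: "E Gt1 = (sk 0 0 0 0 0 0 (- 1) 0 0 0 0 0 0 0 0 1 0 0 0 0 0)" by (simp add: E_def)
lemma E_Gt2: "E Gt2 = (sk 0 0 0 0 0 0 (- 1) 0 0 0 0 0 0 0 0 (- 1) 0 0 0 0 2)" by (simp add: E_def)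
lemmas E_simps = E_Ga1 E_Ga2 E_Ga3 E_Ga4 E_Gb1 E_Gb2 E_Gc1 E_Gc2 E_Gc3 E_Gc4 E_Gh1 E_Gh2 E_Gt1 E_Gt2

definition gen :: "(gi \<Rightarrow> real) \<Rightarrow> mat7" where
  "gen c = (sk (2 * c Ga3) ((- 2) * c Ga4) ((- 2) * c Ga1) (2 * c Ga2) (2 * c Gb1) ((- 2) * c Gb2) ((- 1) * c Gt1 + (- 1) * c Gt2) ((- 1) * c Gb2 + 1 * c Gh2) (1 * c Gb1 + (- 1) * c Gh1) ((- 1) * c Ga2 + 1 * c Gc2) (1 * c Ga1 + (- 1) * c Gc1) (1 * c Gb1 + 1 * c Gh1) (1 * c Gb2 + 1 * c Gh2) (1 * c Ga1 + 1 * c Gc1) (1 * c Ga2 + 1 * c Gc2) (1 * c Gt1 + (- 1) * c Gt2) ((- 1) * c Ga4 + 1 * c Gc4) (1 * c Ga3 + (- 1) * c Gc3) (1 * c Ga3 + 1 * c Gc3) (1 * c Ga4 + 1 * c Gc4) (2 * c Gt2))"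

lemma gen_sum: "gen c = (\<Sum>k\<in>UNIV. c k *\<^sub>R E k)"
  by (simp add: gen_def sum_gi E_simps sk_scale sk_add sk_eq)

definition co :: "gi \<Rightarrow> mat7 \<Rightarrow> real" where "co k X = inner X (E k) / inner (E k) (E k)"


instance gi :: finite
  by standard (simp add: UNIV_gi)

lemma transpose_sk: "transpose (sk x01 x02 x03 x04 x05 x06 x12 x13 x14 x15 x16 x23 x24 x25 x26 x34 x35 x36 x45 x46 x56) = - (sk x01 x02 x03 x04 x05 x06 x12 x13 x14 x15 x16 x23 x24 x25 x26 x34 x35 x36 x45 x46 x56)"
  unfolding mat7_eq all_i7 by (simp add: transpose_def)

lemma transpose_add7: "transpose ((A::mat7) + B) = transpose A + transpose B"
  by (simp add: transpose_def vec_eq_iff)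

lemma phi3_add1: "phi3 (x+y) v w = phi3 x v w + phi3 y v w"
  unfolding phi3_def wedge3_def det3_def by (simp add: algebra_simps)

lemma phi3_scale1: "phi3 (r *\<^sub>R x) v w = r * phi3 x v w"
  unfolding phi3_def wedge3_def det3_def by (simp add: algebra_simps)

lemma phi3_add2: "phi3 u (x+y) w = phi3 u x w + phi3 u y w"
  unfolding phi3_def wedge3_def det3_def by (simp add: algebra_simps)

lemma phi3_scale2: "phi3 u (r *\<^sub>R x) w = r * phi3 u x w"
  unfolding phi3_def wedge3_def det3_def by (simp add: algebra_simps)

lemma phi3_add3: "phi3 u v (x+y) = phi3 u v x + phi3 u v y"
  unfolding phi3_def wedge3_def det3_def by (simp add: algebra_simps)

lemma phi3_scale3: "phi3 u v (r *\<^sub>R x) = r * phi3 u v x"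
  unfolding phi3_def wedge3_def det3_def by (simp add: algebra_simps)

lemma subspace_g2: "subspace g2"
proof -
  have z: "(0::mat7) \<in> g2"
  proof -
    have "phi3 ((0::mat7) *v u) v w = 0" "phi3 u ((0::mat7) *v v) w = 0" "phi3 u v ((0::mat7) *v w) = 0" for u v w
      using phi3_scale1[of 0 u v w] phi3_scale2[of u 0 v w] phi3_scale3[of u v 0 w] by simp_all
    then show ?thesis by (simp add: g2_def transpose_def vec_eq_iff)
  qed
  have a: "A + B \<in> g2" if "A \<in> g2" "B \<in> g2" for A B
  proof -
    have tA: "transpose A = - A" and cA: "\<And>u v w. phi3 (A *v u) v w + phi3 u (A *v v) w + phi3 u v (A *v w) = 0"
      using that(1) by (auto simp: g2_def)
    have tB: "transpose B = - B" and cB: "\<And>u v w. phi3 (B *v u) v w + phi3 u (B *v v) w + phi3 u v (B *v w) = 0"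
      using that(2) by (auto simp: g2_def)
    have "phi3 ((A + B) *v u) v w + phi3 u ((A + B) *v v) w + phi3 u v ((A + B) *v w) = 0" for u v w
    proof -
      have "phi3 ((A + B) *v u) v w + phi3 u ((A + B) *v v) w + phi3 u v ((A + B) *v w)
        = (phi3 (A *v u) v w + phi3 u (A *v v) w + phi3 u v (A *v w)) + (phi3 (B *v u) v w + phi3 u (B *v v) w + phi3 u v (B *v w))"
        by (simp add: matrix_vector_mult_add_rdistrib phi3_add1 phi3_add2 phi3_add3)
      then show ?thesis using cA[of u v w] cB[of u v w] by simp
    qed
    then show ?thesis using tA tB by (simp add: g2_def transpose_add7)
  qed
  have s: "r *\<^sub>R A \<in> g2" if "A \<in> g2" for A r
  proof -
    have tA: "transpose A = - A" and cA: "\<And>u v w. phi3 (A *v u) v w + phi3 u (A *v v) w + phi3 u v (A *v w) = 0"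
      using that(1) by (auto simp: g2_def)
    have "phi3 ((r *\<^sub>R A) *v u) v w + phi3 u ((r *\<^sub>R A) *v v) w + phi3 u v ((r *\<^sub>R A) *v w) = 0" for u v w
    proof -
      have "phi3 ((r *\<^sub>R A) *v u) v w + phi3 u ((r *\<^sub>R A) *v v) w + phi3 u v ((r *\<^sub>R A) *v w)
        = r * (phi3 (A *v u) v w + phi3 u (A *v v) w + phi3 u v (A *v w))"
        by (simp add: scaleR_matrix_vector_assoc[symmetric] phi3_scale1 phi3_scale2 phi3_scale3 algebra_simps)
      then show ?thesis using cA[of u v w] by simp
    qed
    then show ?thesis using tA by (simp add: g2_def transpose_scalar)
  qed
  show ?thesis unfolding subspace_def using z a s by blast
qed

lemma E_g2_Ga1: "E Ga1 \<in> g2"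
  unfolding g2_def E_Ga1 by (simp add: transpose_sk phi3_def wedge3_def det3_def algebra_simps)

lemma E_g2_Ga2: "E Ga2 \<in> g2"
  unfolding g2_def E_Ga2 by (simp add: transpose_sk phi3_def wedge3_def det3_def algebra_simps)

lemma E_g2_Ga3: "E Ga3 \<in> g2"
  unfolding g2_def E_Ga3 by (simp add: transpose_sk phi3_def wedge3_def det3_def algebra_simps)

lemma E_g2_Ga4: "E Ga4 \<in> g2"
  unfolding g2_def E_Ga4 by (simp add: transpose_sk phi3_def wedge3_def det3_def algebra_simps)

lemma E_g2_Gb1: "E Gb1 \<in> g2"
  unfolding g2_def E_Gb1 by (simp add: transpose_sk phi3_def wedge3_def det3_def algebra_simps)

lemma E_g2_Gb2: "E Gb2 \<in> g2"
  unfolding g2_def E_Gb2 by (simp add: transpose_sk phi3_def wedge3_def det3_def algebra_simps)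

lemma E_g2_Gc1: "E Gc1 \<in> g2"
  unfolding g2_def E_Gc1 by (simp add: transpose_sk phi3_def wedge3_def det3_def algebra_simps)

lemma E_g2_Gc2: "E Gc2 \<in> g2"
  unfolding g2_def E_Gc2 by (simp add: transpose_sk phi3_def wedge3_def det3_def algebra_simps)

lemma E_g2_Gc3: "E Gc3 \<in> g2"
  unfolding g2_def E_Gc3 by (simp add: transpose_sk phi3_def wedge3_def det3_def algebra_simps)

lemma E_g2_Gc4: "E Gc4 \<in> g2"
  unfolding g2_def E_Gc4 by (simp add: transpose_sk phi3_def wedge3_def det3_def algebra_simps)

lemma E_g2_Gh1: "E Gh1 \<in> g2"
  unfolding g2_def E_Gh1 by (simp add: transpose_sk phi3_def wedge3_def det3_def algebra_simps)

lemma E_g2_Gh2: "E Gh2 \<in> g2"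
  unfolding g2_def E_Gh2 by (simp add: transpose_sk phi3_def wedge3_def det3_def algebra_simps)

lemma E_g2_Gt1: "E Gt1 \<in> g2"
  unfolding g2_def E_Gt1 by (simp add: transpose_sk phi3_def wedge3_def det3_def algebra_simps)

lemma E_g2_Gt2: "E Gt2 \<in> g2"
  unfolding g2_def E_Gt2 by (simp add: transpose_sk phi3_def wedge3_def det3_def algebra_simps)

lemma E_g2: "E k \<in> g2"
  by (cases k) (simp_all add: E_g2_Ga1 E_g2_Ga2 E_g2_Ga3 E_g2_Ga4 E_g2_Gb1 E_g2_Gb2 E_g2_Gc1 E_g2_Gc2 E_g2_Gc3 E_g2_Gc4 E_g2_Gh1 E_g2_Gh2 E_g2_Gt1 E_g2_Gt2)

lemma g2_rel: assumes "(sk x01 x02 x03 x04 x05 x06 x12 x13 x14 x15 x16 x23 x24 x25 x26 x34 x35 x36 x45 x46 x56) \<in> g2"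
  shows "- x05 + x14 + x23 = 0" "x06 - x13 + x24 = 0" "x03 + x16 + x25 = 0" "- x04 - x15 + x26 = 0" "- x01 + x36 + x45 = 0" "x02 - x35 + x46 = 0" "x12 + x34 + x56 = 0"
proof -
  have c: "\<And>u v w. phi3 ((sk x01 x02 x03 x04 x05 x06 x12 x13 x14 x15 x16 x23 x24 x25 x26 x34 x35 x36 x45 x46 x56) *v u) v w + phi3 u ((sk x01 x02 x03 x04 x05 x06 x12 x13 x14 x15 x16 x23 x24 x25 x26 x34 x35 x36 x45 x46 x56) *v v) w + phi3 u v ((sk x01 x02 x03 x04 x05 x06 x12 x13 x14 x15 x16 x23 x24 x25 x26 x34 x35 x36 x45 x46 x56) *v w) = 0"
    using assms by (simp add: g2_def)
  show "- x05 + x14 + x23 = 0" using c[of "axis I0 1" "axis I1 1" "axis I3 1"]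
    by (simp add: phi3_def wedge3_def det3_def axis_def; linarith)
  show "x06 - x13 + x24 = 0" using c[of "axis I0 1" "axis I1 1" "axis I4 1"]
    by (simp add: phi3_def wedge3_def det3_def axis_def; linarith)
  show "x03 + x16 + x25 = 0" using c[of "axis I0 1" "axis I1 1" "axis I5 1"]
    by (simp add: phi3_def wedge3_def det3_def axis_def; linarith)
  show "- x04 - x15 + x26 = 0" using c[of "axis I0 1" "axis I1 1" "axis I6 1"]
    by (simp add: phi3_def wedge3_def det3_def axis_def; linarith)
  show "- x01 + x36 + x45 = 0" using c[of "axis I0 1" "axis I3 1" "axis I5 1"]
    by (simp add: phi3_def wedge3_def det3_def axis_def; linarith)
  show "x02 - x35 + x46 = 0" using c[of "axis I0 1" "axis I3 1" "axis I6 1"]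
    by (simp add: phi3_def wedge3_def det3_def axis_def; linarith)
  show "x12 + x34 + x56 = 0" using c[of "axis I1 1" "axis I3 1" "axis I6 1"]
    by (simp add: phi3_def wedge3_def det3_def axis_def; linarith)
qed

lemma gen_sk: assumes A: "A = (sk x01 x02 x03 x04 x05 x06 x12 x13 x14 x15 x16 x23 x24 x25 x26 x34 x35 x36 x45 x46 x56)" and "- x05 + x14 + x23 = 0" and "x06 - x13 + x24 = 0" and "x03 + x16 + x25 = 0" and "- x04 - x15 + x26 = 0" and "- x01 + x36 + x45 = 0" and "x02 - x35 + x46 = 0" and "x12 + x34 + x56 = 0"
  shows "A = gen (\<lambda>k. co k A)"
  using assms unfolding gen_def co_def by (simp add: E_simps inner_sk sk_eq, (intro conjI)?, (simp_all add: field_simps))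

lemma g2_gen: assumes "A \<in> g2" shows "A = gen (\<lambda>k. co k A)"
proof -
  have sk: "A = sk (A$I0$I1) (A$I0$I2) (A$I0$I3) (A$I0$I4) (A$I0$I5) (A$I0$I6) (A$I1$I2) (A$I1$I3) (A$I1$I4) (A$I1$I5) (A$I1$I6) (A$I2$I3) (A$I2$I4) (A$I2$I5) (A$I2$I6) (A$I3$I4) (A$I3$I5) (A$I3$I6) (A$I4$I5) (A$I4$I6) (A$I5$I6)" by (rule skew_sk) (use assms in \<open>simp add: g2_def\<close>)
  have "sk (A$I0$I1) (A$I0$I2) (A$I0$I3) (A$I0$I4) (A$I0$I5) (A$I0$I6) (A$I1$I2) (A$I1$I3) (A$I1$I4) (A$I1$I5) (A$I1$I6) (A$I2$I3) (A$I2$I4) (A$I2$I5) (A$I2$I6) (A$I3$I4) (A$I3$I5) (A$I3$I6) (A$I4$I5) (A$I4$I6) (A$I5$I6) \<in> g2" using assms sk by simp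
  note r = g2_rel[OF this]
  show ?thesis by (rule gen_sk[OF sk r])
qed

lemma co_gen: "co k (gen c) = c k"
  by (cases k) (simp_all add: co_def gen_def E_simps inner_sk)

definition nE :: "gi \<Rightarrow> real" where "nE k = (case k of Ga1 \<Rightarrow> 12 | Ga2 \<Rightarrow> 12 | Ga3 \<Rightarrow> 12 | Ga4 \<Rightarrow> 12 | Gb1 \<Rightarrow> 12 | Gb2 \<Rightarrow> 12 | Gc1 \<Rightarrow> 4 | Gc2 \<Rightarrow> 4 | Gc3 \<Rightarrow> 4 | Gc4 \<Rightarrow> 4 | Gh1 \<Rightarrow> 4 | Gh2 \<Rightarrow> 4 | Gt1 \<Rightarrow> 4 | Gt2 \<Rightarrow> 12)"

lemma inner_E: "inner (E k) (E l) = (if k = l then nE k else 0)"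
  by (cases k; cases l) (simp_all add: E_simps inner_sk nE_def)

lemma nE_pos: "nE k > 0"
  by (cases k) (simp_all add: nE_def)

lemma co_E: "co k (E l) = (if k = l then 1 else 0)"
  using nE_pos[of k] nE_pos[of l] by (simp add: co_def inner_E inner_commute)

lemma gen_in_g2: "gen c \<in> g2"
  unfolding gen_sum by (intro subspace_sum[OF subspace_g2] subspace_scale[OF subspace_g2] E_g2)

lemma g2_span: "g2 = span (range E)"
proof
  show "span (range E) \<subseteq> g2" by (rule span_minimal) (auto simp: E_g2 subspace_g2)
  show "g2 \<subseteq> span (range E)"
  proof
    fix A assume "A \<in> g2"
    then have "A = gen (\<lambda>k. co k A)" by (rule g2_gen)
    also have "\<dots> \<in> span (range E)" unfolding gen_sum
      by (intro span_sum span_scale span_base) auto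
    finally show "A \<in> span (range E)" .
  qed
qed

lemma inj_E: "inj E"
proof (rule injI)
  fix k l assume "E k = E l"
  then have "co k (E k) = co k (E l)" by simp
  then show "k = l" by (simp add: co_E split: if_splits)
qed

lemma matrix_add_rdistrib7: "((B::mat7) + C) ** A = B ** A + C ** A"
  by (simp add: matrix_matrix_mult_def vec_eq_iff sum.distrib algebra_simps)

lemma linear_lbr: "linear (lbr X)"
  by (rule linearI) (simp_all add: lbr_def matrix_add_ldistrib matrix_add_rdistrib7 matrix_scalar_ac scalar_matrix_assoc algebra_simps)

lemma killing_E: "killing X Y = (\<Sum>k\<in>UNIV. inner (E k) (lbr X (lbr Y (E k))) / inner (E k) (E k))"
proof -
  have lf: "linear (\<lambda>Z. lbr X (lbr Y Z))"
    using linear_compose[OF linear_lbr[of Y] linear_lbr[of X]] by (simp add: comp_def)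
  have po: "pairwise orthogonal (range E)"
    by (auto simp: pairwise_def orthogonal_def inner_E)
  have nz: "0 \<notin> range E"
  proof
    assume "0 \<in> range E" then obtain k where "E k = 0" by auto
    then have "inner (E k) (E k) = 0" by simp
    then show False using nE_pos[of k] by (simp add: inner_E)
  qed
  have "killing X Y = (\<Sum>c\<in>range E. inner c (lbr X (lbr Y c)) / inner c c)"
    unfolding killing_def
    by (rule trace_on_orth[OF _ _ po nz g2_span[symmetric] lf]) (auto simp: E_g2)
  also have "\<dots> = (\<Sum>k\<in>UNIV. inner (E k) (lbr X (lbr Y (E k))) / inner (E k) (E k))"
    by (subst sum.reindex[OF inj_E]) (simp add: comp_def)
  finally show ?thesis .
qed


lemma tor_sk: "tor e1 e2 e3 = sk 0 0 0 0 0 0 (- (e2 - e3)) 0 0 0 0 0 0 0 0 (- (e3 - e1)) 0 0 0 0 (- (e1 - e2))"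
  unfolding tor_def rotgen_def mat7_eq all_i7 by simp

lemma gen_add: "gen c + gen d = gen (\<lambda>k. c k + d k)"
  by (simp add: gen_def sk_add algebra_simps)

lemma gen_scale: "r *\<^sub>R gen c = gen (\<lambda>k. r * c k)"
  by (simp add: gen_def sk_scale algebra_simps)

lemma gen_ind: "gen (\<lambda>j. if j = k then r else 0) = r *\<^sub>R E k"
  by (cases k) (simp_all add: gen_def E_simps sk_scale sk_eq)

lemma gen_zero: "gen (\<lambda>j. 0) = 0"
  by (simp add: gen_def sk_zero)

lemma kipt_Ga1: "inner (E Ga1) (lbr (gen c) (lbr (gen d) (E Ga1))) = (-48*(c Ga2)*(d Ga2) - 84*(c Ga3)*(d Ga3) + 24*(c Ga3)*(d Gc3) - 84*(c Ga4)*(d Ga4) + 24*(c Ga4)*(d Gc4) - 84*(c Gb1)*(d Gb1) - 24*(c Gb1)*(d Gh1) - 84*(c Gb2)*(d Gb2) + 24*(c Gb2)*(d Gh2) + 24*(c Gc3)*(d Ga3) - 12*(c Gc3)*(d Gc3) + 24*(c Gc4)*(d Ga4) - 12*(c Gc4)*(d Gc4) - 24*(c Gh1)*(d Gb1) - 12*(c Gh1)*(d Gh1) + 24*(c Gh2)*(d Gb2) - 12*(c Gh2)*(d Gh2) - 12*(c Gt1)*(d Gt1) + 12*(c Gt1)*(d Gt2) + 12*(c Gt2)*(d Gt1) - 12*(c Gt2)*(d Gt2))"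
  unfolding E_Ga1 gen_def lbr_sk inner_sk by (simp add: algebra_simps)

lemma kipt_Ga2: "inner (E Ga2) (lbr (gen c) (lbr (gen d) (E Ga2))) = (-48*(c Ga1)*(d Ga1) - 84*(c Ga3)*(d Ga3) - 24*(c Ga3)*(d Gc3) - 84*(c Ga4)*(d Ga4) - 24*(c Ga4)*(d Gc4) - 84*(c Gb1)*(d Gb1) + 24*(c Gb1)*(d Gh1) - 84*(c Gb2)*(d Gb2) - 24*(c Gb2)*(d Gh2) - 24*(c Gc3)*(d Ga3) - 12*(c Gc3)*(d Gc3) - 24*(c Gc4)*(d Ga4) - 12*(c Gc4)*(d Gc4) + 24*(c Gh1)*(d Gb1) - 12*(c Gh1)*(d Gh1) - 24*(c Gh2)*(d Gb2) - 12*(c Gh2)*(d Gh2) - 12*(c Gt1)*(d Gt1) + 12*(c Gt1)*(d Gt2) + 12*(c Gt2)*(d Gt1) - 12*(c Gt2)*(d Gt2))"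
  unfolding E_Ga2 gen_def lbr_sk inner_sk by (simp add: algebra_simps)

lemma kipt_Ga3: "inner (E Ga3) (lbr (gen c) (lbr (gen d) (E Ga3))) = (-84*(c Ga1)*(d Ga1) + 24*(c Ga1)*(d Gc1) - 84*(c Ga2)*(d Ga2) + 24*(c Ga2)*(d Gc2) - 48*(c Ga4)*(d Ga4) - 84*(c Gb1)*(d Gb1) + 24*(c Gb1)*(d Gh1) - 84*(c Gb2)*(d Gb2) + 24*(c Gb2)*(d Gh2) + 24*(c Gc1)*(d Ga1) - 12*(c Gc1)*(d Gc1) + 24*(c Gc2)*(d Ga2) - 12*(c Gc2)*(d Gc2) + 24*(c Gh1)*(d Gb1) - 12*(c Gh1)*(d Gh1) + 24*(c Gh2)*(d Gb2) - 12*(c Gh2)*(d Gh2) - 12*(c Gt1)*(d Gt1) - 12*(c Gt1)*(d Gt2) - 12*(c Gt2)*(d Gt1) - 12*(c Gt2)*(d Gt2))"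
  unfolding E_Ga3 gen_def lbr_sk inner_sk by (simp add: algebra_simps)

lemma kipt_Ga4: "inner (E Ga4) (lbr (gen c) (lbr (gen d) (E Ga4))) = (-84*(c Ga1)*(d Ga1) - 24*(c Ga1)*(d Gc1) - 84*(c Ga2)*(d Ga2) - 24*(c Ga2)*(d Gc2) - 48*(c Ga3)*(d Ga3) - 84*(c Gb1)*(d Gb1) - 24*(c Gb1)*(d Gh1) - 84*(c Gb2)*(d Gb2) - 24*(c Gb2)*(d Gh2) - 24*(c Gc1)*(d Ga1) - 12*(c Gc1)*(d Gc1) - 24*(c Gc2)*(d Ga2) - 12*(c Gc2)*(d Gc2) - 24*(c Gh1)*(d Gb1) - 12*(c Gh1)*(d Gh1) - 24*(c Gh2)*(d Gb2) - 12*(c Gh2)*(d Gh2) - 12*(c Gt1)*(d Gt1) - 12*(c Gt1)*(d Gt2) - 12*(c Gt2)*(d Gt1) - 12*(c Gt2)*(d Gt2))"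
  unfolding E_Ga4 gen_def lbr_sk inner_sk by (simp add: algebra_simps)

lemma kipt_Gb1: "inner (E Gb1) (lbr (gen c) (lbr (gen d) (E Gb1))) = (-84*(c Ga1)*(d Ga1) - 24*(c Ga1)*(d Gc1) - 84*(c Ga2)*(d Ga2) + 24*(c Ga2)*(d Gc2) - 84*(c Ga3)*(d Ga3) - 24*(c Ga3)*(d Gc3) - 84*(c Ga4)*(d Ga4) + 24*(c Ga4)*(d Gc4) - 48*(c Gb2)*(d Gb2) - 24*(c Gc1)*(d Ga1) - 12*(c Gc1)*(d Gc1) + 24*(c Gc2)*(d Ga2) - 12*(c Gc2)*(d Gc2) - 24*(c Gc3)*(d Ga3) - 12*(c Gc3)*(d Gc3) + 24*(c Gc4)*(d Ga4) - 12*(c Gc4)*(d Gc4) - 48*(c Gt2)*(d Gt2))"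
  unfolding E_Gb1 gen_def lbr_sk inner_sk by (simp add: algebra_simps)

lemma kipt_Gb2: "inner (E Gb2) (lbr (gen c) (lbr (gen d) (E Gb2))) = (-84*(c Ga1)*(d Ga1) + 24*(c Ga1)*(d Gc1) - 84*(c Ga2)*(d Ga2) - 24*(c Ga2)*(d Gc2) - 84*(c Ga3)*(d Ga3) + 24*(c Ga3)*(d Gc3) - 84*(c Ga4)*(d Ga4) - 24*(c Ga4)*(d Gc4) - 48*(c Gb1)*(d Gb1) + 24*(c Gc1)*(d Ga1) - 12*(c Gc1)*(d Gc1) - 24*(c Gc2)*(d Ga2) - 12*(c Gc2)*(d Gc2) + 24*(c Gc3)*(d Ga3) - 12*(c Gc3)*(d Gc3) - 24*(c Gc4)*(d Ga4) - 12*(c Gc4)*(d Gc4) - 48*(c Gt2)*(d Gt2))"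
  unfolding E_Gb2 gen_def lbr_sk inner_sk by (simp add: algebra_simps)

lemma kipt_Gc1: "inner (E Gc1) (lbr (gen c) (lbr (gen d) (E Gc1))) = (-12*(c Ga3)*(d Ga3) - 12*(c Ga4)*(d Ga4) - 12*(c Gb1)*(d Gb1) - 12*(c Gb2)*(d Gb2) - 16*(c Gc2)*(d Gc2) - 4*(c Gc3)*(d Gc3) - 4*(c Gc4)*(d Gc4) - 4*(c Gh1)*(d Gh1) - 4*(c Gh2)*(d Gh2) - 4*(c Gt1)*(d Gt1) - 12*(c Gt1)*(d Gt2) - 12*(c Gt2)*(d Gt1) - 36*(c Gt2)*(d Gt2))"
  unfolding E_Gc1 gen_def lbr_sk inner_sk by (simp add: algebra_simps)

lemma kipt_Gc2: "inner (E Gc2) (lbr (gen c) (lbr (gen d) (E Gc2))) = (-12*(c Ga3)*(d Ga3) - 12*(c Ga4)*(d Ga4) - 12*(c Gb1)*(d Gb1) - 12*(c Gb2)*(d Gb2) - 16*(c Gc1)*(d Gc1) - 4*(c Gc3)*(d Gc3) - 4*(c Gc4)*(d Gc4) - 4*(c Gh1)*(d Gh1) - 4*(c Gh2)*(d Gh2) - 4*(c Gt1)*(d Gt1) - 12*(c Gt1)*(d Gt2) - 12*(c Gt2)*(d Gt1) - 36*(c Gt2)*(d Gt2))"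
  unfolding E_Gc2 gen_def lbr_sk inner_sk by (simp add: algebra_simps)

lemma kipt_Gc3: "inner (E Gc3) (lbr (gen c) (lbr (gen d) (E Gc3))) = (-12*(c Ga1)*(d Ga1) - 12*(c Ga2)*(d Ga2) - 12*(c Gb1)*(d Gb1) - 12*(c Gb2)*(d Gb2) - 4*(c Gc1)*(d Gc1) - 4*(c Gc2)*(d Gc2) - 16*(c Gc4)*(d Gc4) - 4*(c Gh1)*(d Gh1) - 4*(c Gh2)*(d Gh2) - 4*(c Gt1)*(d Gt1) + 12*(c Gt1)*(d Gt2) + 12*(c Gt2)*(d Gt1) - 36*(c Gt2)*(d Gt2))"
  unfolding E_Gc3 gen_def lbr_sk inner_sk by (simp add: algebra_simps)

lemma kipt_Gc4: "inner (E Gc4) (lbr (gen c) (lbr (gen d) (E Gc4))) = (-12*(c Ga1)*(d Ga1) - 12*(c Ga2)*(d Ga2) - 12*(c Gb1)*(d Gb1) - 12*(c Gb2)*(d Gb2) - 4*(c Gc1)*(d Gc1) - 4*(c Gc2)*(d Gc2) - 16*(c Gc3)*(d Gc3) - 4*(c Gh1)*(d Gh1) - 4*(c Gh2)*(d Gh2) - 4*(c Gt1)*(d Gt1) + 12*(c Gt1)*(d Gt2) + 12*(c Gt2)*(d Gt1) - 36*(c Gt2)*(d Gt2))"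
  unfolding E_Gc4 gen_def lbr_sk inner_sk by (simp add: algebra_simps)

lemma kipt_Gh1: "inner (E Gh1) (lbr (gen c) (lbr (gen d) (E Gh1))) = (-12*(c Ga1)*(d Ga1) - 12*(c Ga2)*(d Ga2) - 12*(c Ga3)*(d Ga3) - 12*(c Ga4)*(d Ga4) - 4*(c Gc1)*(d Gc1) - 4*(c Gc2)*(d Gc2) - 4*(c Gc3)*(d Gc3) - 4*(c Gc4)*(d Gc4) - 16*(c Gh2)*(d Gh2) - 16*(c Gt1)*(d Gt1))"
  unfolding E_Gh1 gen_def lbr_sk inner_sk by (simp add: algebra_simps)

lemma kipt_Gh2: "inner (E Gh2) (lbr (gen c) (lbr (gen d) (E Gh2))) = (-12*(c Ga1)*(d Ga1) - 12*(c Ga2)*(d Ga2) - 12*(c Ga3)*(d Ga3) - 12*(c Ga4)*(d Ga4) - 4*(c Gc1)*(d Gc1) - 4*(c Gc2)*(d Gc2) - 4*(c Gc3)*(d Gc3) - 4*(c Gc4)*(d Gc4) - 16*(c Gh1)*(d Gh1) - 16*(c Gt1)*(d Gt1))"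
  unfolding E_Gh2 gen_def lbr_sk inner_sk by (simp add: algebra_simps)

lemma kipt_Gt1: "inner (E Gt1) (lbr (gen c) (lbr (gen d) (E Gt1))) = (-12*(c Ga1)*(d Ga1) - 12*(c Ga2)*(d Ga2) - 12*(c Ga3)*(d Ga3) - 12*(c Ga4)*(d Ga4) - 4*(c Gc1)*(d Gc1) - 4*(c Gc2)*(d Gc2) - 4*(c Gc3)*(d Gc3) - 4*(c Gc4)*(d Gc4) - 16*(c Gh1)*(d Gh1) - 16*(c Gh2)*(d Gh2))"
  unfolding E_Gt1 gen_def lbr_sk inner_sk by (simp add: algebra_simps)

lemma kipt_Gt2: "inner (E Gt2) (lbr (gen c) (lbr (gen d) (E Gt2))) = (-12*(c Ga1)*(d Ga1) - 12*(c Ga2)*(d Ga2) - 12*(c Ga3)*(d Ga3) - 12*(c Ga4)*(d Ga4) - 48*(c Gb1)*(d Gb1) - 48*(c Gb2)*(d Gb2) - 36*(c Gc1)*(d Gc1) - 36*(c Gc2)*(d Gc2) - 36*(c Gc3)*(d Gc3) - 36*(c Gc4)*(d Gc4))"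
  unfolding E_Gt2 gen_def lbr_sk inner_sk by (simp add: algebra_simps)

lemma kip_gen: "kip (gen c) (gen d) = (\<Sum>k\<in>UNIV. 4 * nE k * c k * d k)"
  unfolding kip_def killing_E sum_gi kipt_Ga1 kipt_Ga2 kipt_Ga3 kipt_Ga4 kipt_Gb1 kipt_Gb2 kipt_Gc1 kipt_Gc2 kipt_Gc3 kipt_Gc4 kipt_Gh1 kipt_Gh2 kipt_Gt1 kipt_Gt2 inner_E by (simp add: nE_def field_simps)

definition supp_in :: "(gi \<Rightarrow> real) \<Rightarrow> gi set \<Rightarrow> bool" where
  "supp_in c S \<longleftrightarrow> (\<forall>k. k \<notin> S \<longrightarrow> c k = 0)"

lemma rootsp_H0:
  assumes "X \<in> rootsp a1 a2 a3"
  shows "lbr (tor 1 2 (-3)) (lbr (tor 1 2 (-3)) X) = - ((a1 * 1 + a2 * 2 + a3 * (-3))^2) *\<^sub>R X"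
proof -
  have "\<forall>e1 e2 e3. e1 + e2 + e3 = 0 \<longrightarrow> lbr (tor e1 e2 e3) (lbr (tor e1 e2 e3) X) = - ((a1 * e1 + a2 * e2 + a3 * e3)^2) *\<^sub>R X"
    using assms unfolding rootsp_def by blast
  then have "(1::real) + 2 + (-3) = 0 \<longrightarrow> lbr (tor 1 2 (-3)) (lbr (tor 1 2 (-3)) X) = - ((a1 * 1 + a2 * 2 + a3 * (-3))^2) *\<^sub>R X"
    by blast
  then show ?thesis by (rule mp) simp
qed

lemma rootsp_A: "X \<in> rootsp 1 0 (-1) \<longleftrightarrow> (\<exists>c. X = gen c \<and> supp_in c {Ga1, Ga2})"
proof
  assume X: "X \<in> rootsp 1 0 (-1)"
  define c where "c = (\<lambda>k. co k X)"
  have g: "X = gen c" unfolding c_def using X by (intro g2_gen) (simp add: rootsp_def)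
  have H: "lbr (tor 1 2 (-3)) (lbr (tor 1 2 (-3)) (gen c)) = - ((1 * 1 + 0 * 2 + (-1) * (-3))^2) *\<^sub>R gen c"
    using rootsp_H0[OF X] g by simp
  have "supp_in c {Ga1, Ga2}" using H unfolding supp_in_def gen_def tor_sk
    by (simp add: all_gi lbr_sk sk_scale sk_eq, (elim conjE)?, (intro conjI)?, (linarith+)?)
  then show "\<exists>c. X = gen c \<and> supp_in c {Ga1, Ga2}" using g by blast
next
  assume "\<exists>c. X = gen c \<and> supp_in c {Ga1, Ga2}"
  then obtain c where g: "X = gen c" and s: "supp_in c {Ga1, Ga2}" by blast
  have z: "c k = 0" if "k \<notin> {Ga1, Ga2}" for k using s that by (simp add: supp_in_def)
  have "X \<in> g2" using g gen_in_g2 by simp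
  moreover have "lbr (tor e1 e2 e3) (lbr (tor e1 e2 e3) X) = - ((1 * e1 + 0 * e2 + (-1) * e3)^2) *\<^sub>R X" if "e1 + e2 + e3 = 0" for e1 e2 e3
  proof -
    have e3: "e3 = - e1 - e2" using that by linarith
    show ?thesis unfolding g gen_def tor_sk e3 by (simp add: z lbr_sk sk_scale sk_eq power2_eq_square algebra_simps)
  qed
  ultimately show "X \<in> rootsp 1 0 (-1)" unfolding rootsp_def by blast
qed

lemma rootsp_A2: "X \<in> rootsp 0 1 (-1) \<longleftrightarrow> (\<exists>c. X = gen c \<and> supp_in c {Ga3, Ga4})"
proof
  assume X: "X \<in> rootsp 0 1 (-1)"
  define c where "c = (\<lambda>k. co k X)"
  have g: "X = gen c" unfolding c_def using X by (intro g2_gen) (simp add: rootsp_def)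
  have H: "lbr (tor 1 2 (-3)) (lbr (tor 1 2 (-3)) (gen c)) = - ((0 * 1 + 1 * 2 + (-1) * (-3))^2) *\<^sub>R gen c"
    using rootsp_H0[OF X] g by simp
  have "supp_in c {Ga3, Ga4}" using H unfolding supp_in_def gen_def tor_sk
    by (simp add: all_gi lbr_sk sk_scale sk_eq, (elim conjE)?, (intro conjI)?, (linarith+)?)
  then show "\<exists>c. X = gen c \<and> supp_in c {Ga3, Ga4}" using g by blast
next
  assume "\<exists>c. X = gen c \<and> supp_in c {Ga3, Ga4}"
  then obtain c where g: "X = gen c" and s: "supp_in c {Ga3, Ga4}" by blast
  have z: "c k = 0" if "k \<notin> {Ga3, Ga4}" for k using s that by (simp add: supp_in_def)
  have "X \<in> g2" using g gen_in_g2 by simp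
  moreover have "lbr (tor e1 e2 e3) (lbr (tor e1 e2 e3) X) = - ((0 * e1 + 1 * e2 + (-1) * e3)^2) *\<^sub>R X" if "e1 + e2 + e3 = 0" for e1 e2 e3
  proof -
    have e3: "e3 = - e1 - e2" using that by linarith
    show ?thesis unfolding g gen_def tor_sk e3 by (simp add: z lbr_sk sk_scale sk_eq power2_eq_square algebra_simps)
  qed
  ultimately show "X \<in> rootsp 0 1 (-1)" unfolding rootsp_def by blast
qed

lemma rootsp_B: "X \<in> rootsp 1 (-1) 0 \<longleftrightarrow> (\<exists>c. X = gen c \<and> supp_in c {Gb1, Gb2})"
proof
  assume X: "X \<in> rootsp 1 (-1) 0"
  define c where "c = (\<lambda>k. co k X)"
  have g: "X = gen c" unfolding c_def using X by (intro g2_gen) (simp add: rootsp_def)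
  have H: "lbr (tor 1 2 (-3)) (lbr (tor 1 2 (-3)) (gen c)) = - ((1 * 1 + (-1) * 2 + 0 * (-3))^2) *\<^sub>R gen c"
    using rootsp_H0[OF X] g by simp
  have "supp_in c {Gb1, Gb2}" using H unfolding supp_in_def gen_def tor_sk
    by (simp add: all_gi lbr_sk sk_scale sk_eq, (elim conjE)?, (intro conjI)?, (linarith+)?)
  then show "\<exists>c. X = gen c \<and> supp_in c {Gb1, Gb2}" using g by blast
next
  assume "\<exists>c. X = gen c \<and> supp_in c {Gb1, Gb2}"
  then obtain c where g: "X = gen c" and s: "supp_in c {Gb1, Gb2}" by blast
  have z: "c k = 0" if "k \<notin> {Gb1, Gb2}" for k using s that by (simp add: supp_in_def)
  have "X \<in> g2" using g gen_in_g2 by simp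
  moreover have "lbr (tor e1 e2 e3) (lbr (tor e1 e2 e3) X) = - ((1 * e1 + (-1) * e2 + 0 * e3)^2) *\<^sub>R X" if "e1 + e2 + e3 = 0" for e1 e2 e3
  proof -
    have e3: "e3 = - e1 - e2" using that by linarith
    show ?thesis unfolding g gen_def tor_sk e3 by (simp add: z lbr_sk sk_scale sk_eq power2_eq_square algebra_simps)
  qed
  ultimately show "X \<in> rootsp 1 (-1) 0" unfolding rootsp_def by blast
qed

lemma rootsp_C: "X \<in> rootsp 1 (-2) 1 \<longleftrightarrow> (\<exists>c. X = gen c \<and> supp_in c {Gc1, Gc2})"
proof
  assume X: "X \<in> rootsp 1 (-2) 1"
  define c where "c = (\<lambda>k. co k X)"
  have g: "X = gen c" unfolding c_def using X by (intro g2_gen) (simp add: rootsp_def)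
  have H: "lbr (tor 1 2 (-3)) (lbr (tor 1 2 (-3)) (gen c)) = - ((1 * 1 + (-2) * 2 + 1 * (-3))^2) *\<^sub>R gen c"
    using rootsp_H0[OF X] g by simp
  have "supp_in c {Gc1, Gc2}" using H unfolding supp_in_def gen_def tor_sk
    by (simp add: all_gi lbr_sk sk_scale sk_eq, (elim conjE)?, (intro conjI)?, (linarith+)?)
  then show "\<exists>c. X = gen c \<and> supp_in c {Gc1, Gc2}" using g by blast
next
  assume "\<exists>c. X = gen c \<and> supp_in c {Gc1, Gc2}"
  then obtain c where g: "X = gen c" and s: "supp_in c {Gc1, Gc2}" by blast
  have z: "c k = 0" if "k \<notin> {Gc1, Gc2}" for k using s that by (simp add: supp_in_def)
  have "X \<in> g2" using g gen_in_g2 by simp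
  moreover have "lbr (tor e1 e2 e3) (lbr (tor e1 e2 e3) X) = - ((1 * e1 + (-2) * e2 + 1 * e3)^2) *\<^sub>R X" if "e1 + e2 + e3 = 0" for e1 e2 e3
  proof -
    have e3: "e3 = - e1 - e2" using that by linarith
    show ?thesis unfolding g gen_def tor_sk e3 by (simp add: z lbr_sk sk_scale sk_eq power2_eq_square algebra_simps)
  qed
  ultimately show "X \<in> rootsp 1 (-2) 1" unfolding rootsp_def by blast
qed

lemma rootsp_C2: "X \<in> rootsp 2 (-1) (-1) \<longleftrightarrow> (\<exists>c. X = gen c \<and> supp_in c {Gc3, Gc4})"
proof
  assume X: "X \<in> rootsp 2 (-1) (-1)"
  define c where "c = (\<lambda>k. co k X)"
  have g: "X = gen c" unfolding c_def using X by (intro g2_gen) (simp add: rootsp_def)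
  have H: "lbr (tor 1 2 (-3)) (lbr (tor 1 2 (-3)) (gen c)) = - ((2 * 1 + (-1) * 2 + (-1) * (-3))^2) *\<^sub>R gen c"
    using rootsp_H0[OF X] g by simp
  have "supp_in c {Gc3, Gc4}" using H unfolding supp_in_def gen_def tor_sk
    by (simp add: all_gi lbr_sk sk_scale sk_eq, (elim conjE)?, (intro conjI)?, (linarith+)?)
  then show "\<exists>c. X = gen c \<and> supp_in c {Gc3, Gc4}" using g by blast
next
  assume "\<exists>c. X = gen c \<and> supp_in c {Gc3, Gc4}"
  then obtain c where g: "X = gen c" and s: "supp_in c {Gc3, Gc4}" by blast
  have z: "c k = 0" if "k \<notin> {Gc3, Gc4}" for k using s that by (simp add: supp_in_def)
  have "X \<in> g2" using g gen_in_g2 by simp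
  moreover have "lbr (tor e1 e2 e3) (lbr (tor e1 e2 e3) X) = - ((2 * e1 + (-1) * e2 + (-1) * e3)^2) *\<^sub>R X" if "e1 + e2 + e3 = 0" for e1 e2 e3
  proof -
    have e3: "e3 = - e1 - e2" using that by linarith
    show ?thesis unfolding g gen_def tor_sk e3 by (simp add: z lbr_sk sk_scale sk_eq power2_eq_square algebra_simps)
  qed
  ultimately show "X \<in> rootsp 2 (-1) (-1)" unfolding rootsp_def by blast
qed

lemma rootsp_H: "X \<in> rootsp 1 1 (-2) \<longleftrightarrow> (\<exists>c. X = gen c \<and> supp_in c {Gh1, Gh2})"
proof
  assume X: "X \<in> rootsp 1 1 (-2)"
  define c where "c = (\<lambda>k. co k X)"
  have g: "X = gen c" unfolding c_def using X by (intro g2_gen) (simp add: rootsp_def)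
  have H: "lbr (tor 1 2 (-3)) (lbr (tor 1 2 (-3)) (gen c)) = - ((1 * 1 + 1 * 2 + (-2) * (-3))^2) *\<^sub>R gen c"
    using rootsp_H0[OF X] g by simp
  have "supp_in c {Gh1, Gh2}" using H unfolding supp_in_def gen_def tor_sk
    by (simp add: all_gi lbr_sk sk_scale sk_eq, (elim conjE)?, (intro conjI)?, (linarith+)?)
  then show "\<exists>c. X = gen c \<and> supp_in c {Gh1, Gh2}" using g by blast
next
  assume "\<exists>c. X = gen c \<and> supp_in c {Gh1, Gh2}"
  then obtain c where g: "X = gen c" and s: "supp_in c {Gh1, Gh2}" by blast
  have z: "c k = 0" if "k \<notin> {Gh1, Gh2}" for k using s that by (simp add: supp_in_def)
  have "X \<in> g2" using g gen_in_g2 by simp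
  moreover have "lbr (tor e1 e2 e3) (lbr (tor e1 e2 e3) X) = - ((1 * e1 + 1 * e2 + (-2) * e3)^2) *\<^sub>R X" if "e1 + e2 + e3 = 0" for e1 e2 e3
  proof -
    have e3: "e3 = - e1 - e2" using that by linarith
    show ?thesis unfolding g gen_def tor_sk e3 by (simp add: z lbr_sk sk_scale sk_eq power2_eq_square algebra_simps)
  qed
  ultimately show "X \<in> rootsp 1 1 (-2)" unfolding rootsp_def by blast
qed


lemma supp_zero: "supp_in c S \<Longrightarrow> k \<notin> S \<Longrightarrow> c k = 0"
  by (simp add: supp_in_def)

lemma split_gen:
  assumes "supp_in c (S \<union> T)"
  shows "gen c = gen (\<lambda>k. if k \<in> S then c k else 0) + gen (\<lambda>k. if k \<in> S then 0 else c k)"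
    and "supp_in (\<lambda>k. if k \<in> S then c k else 0) S" and "supp_in (\<lambda>k. if k \<in> S then 0 else c k) T"
proof -
  have "(\<lambda>k. (if k \<in> S then c k else 0) + (if k \<in> S then 0 else c k)) = c" by auto
  then show "gen c = gen (\<lambda>k. if k \<in> S then c k else 0) + gen (\<lambda>k. if k \<in> S then 0 else c k)"
    by (simp add: gen_add)
  show "supp_in (\<lambda>k. if k \<in> S then c k else 0) S" by (simp add: supp_in_def)
  show "supp_in (\<lambda>k. if k \<in> S then 0 else c k) T" using assms by (simp add: supp_in_def)
qed

lemma sum_gen:
  assumes "supp_in c S" "supp_in d T"
  shows "gen c + gen d = gen (\<lambda>k. c k + d k)" and "supp_in (\<lambda>k. c k + d k) (S \<union> T)"
  using assms by (auto simp: gen_add supp_in_def)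

lemma p1_char: "X \<in> p1 \<longleftrightarrow> (\<exists>c. X = gen c \<and> supp_in c {Ga1, Ga2, Ga3, Ga4})"
proof
  assume "X \<in> p1"
  then obtain Y Z where X: "X = Y + Z" and Y: "Y \<in> rootsp 1 0 (-1)" and Z: "Z \<in> rootsp 0 1 (-1)"
    unfolding p1_def by blast
  obtain c where c: "Y = gen c" "supp_in c {Ga1, Ga2}" using Y by (auto simp: rootsp_A)
  obtain d where d: "Z = gen d" "supp_in d {Ga3, Ga4}" using Z by (auto simp: rootsp_A2)
  show "\<exists>c. X = gen c \<and> supp_in c {Ga1, Ga2, Ga3, Ga4}" using sum_gen[OF c(2) d(2)] X c d
    by (intro exI[of _ "\<lambda>k. c k + d k"]) (simp add: insert_commute)
next
  assume "\<exists>c. X = gen c \<and> supp_in c {Ga1, Ga2, Ga3, Ga4}"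
  then obtain c where X: "X = gen c" and s: "supp_in c {Ga1, Ga2, Ga3, Ga4}" by blast
  have s': "supp_in c ({Ga1, Ga2} \<union> {Ga3, Ga4})" using s by (simp add: insert_commute)
  note sp = split_gen[OF s']
  have "gen (\<lambda>k. if k \<in> {Ga1, Ga2} then c k else 0) \<in> rootsp 1 0 (-1)" using sp(2) by (auto simp: rootsp_A)
  moreover have "gen (\<lambda>k. if k \<in> {Ga1, Ga2} then 0 else c k) \<in> rootsp 0 1 (-1)" using sp(3) by (auto simp: rootsp_A2)
  ultimately show "X \<in> p1" unfolding p1_def X sp(1) by blast
qed

lemma p3_char: "X \<in> p3 \<longleftrightarrow> (\<exists>c. X = gen c \<and> supp_in c {Gc1, Gc2, Gc3, Gc4})"
proof
  assume "X \<in> p3"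
  then obtain Y Z where X: "X = Y + Z" and Y: "Y \<in> rootsp 1 (-2) 1" and Z: "Z \<in> rootsp 2 (-1) (-1)"
    unfolding p3_def by blast
  obtain c where c: "Y = gen c" "supp_in c {Gc1, Gc2}" using Y by (auto simp: rootsp_C)
  obtain d where d: "Z = gen d" "supp_in d {Gc3, Gc4}" using Z by (auto simp: rootsp_C2)
  show "\<exists>c. X = gen c \<and> supp_in c {Gc1, Gc2, Gc3, Gc4}" using sum_gen[OF c(2) d(2)] X c d
    by (intro exI[of _ "\<lambda>k. c k + d k"]) (simp add: insert_commute)
next
  assume "\<exists>c. X = gen c \<and> supp_in c {Gc1, Gc2, Gc3, Gc4}"
  then obtain c where X: "X = gen c" and s: "supp_in c {Gc1, Gc2, Gc3, Gc4}" by blast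
  have s': "supp_in c ({Gc1, Gc2} \<union> {Gc3, Gc4})" using s by (simp add: insert_commute)
  note sp = split_gen[OF s']
  have "gen (\<lambda>k. if k \<in> {Gc1, Gc2} then c k else 0) \<in> rootsp 1 (-2) 1" using sp(2) by (auto simp: rootsp_C)
  moreover have "gen (\<lambda>k. if k \<in> {Gc1, Gc2} then 0 else c k) \<in> rootsp 2 (-1) (-1)" using sp(3) by (auto simp: rootsp_C2)
  ultimately show "X \<in> p3" unfolding p3_def X sp(1) by blast
qed

lemma p2_char: "X \<in> p2 \<longleftrightarrow> (\<exists>c. X = gen c \<and> supp_in c {Gb1, Gb2})"
  unfolding p2_def by (rule rootsp_B)

definition PI :: "gi set" where "PI = {Ga1, Ga2, Ga3, Ga4, Gb1, Gb2, Gc1, Gc2, Gc3, Gc4}"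

lemma pspace_char: "X \<in> pspace \<longleftrightarrow> (\<exists>c. X = gen c \<and> supp_in c PI)"
proof
  assume "X \<in> pspace"
  then obtain X1 X2 X3 where X: "X = X1 + X2 + X3" and x1: "X1 \<in> p1" and x2: "X2 \<in> p2" and x3: "X3 \<in> p3"
    unfolding pspace_def by blast
  obtain c1 where c1: "X1 = gen c1" "supp_in c1 {Ga1, Ga2, Ga3, Ga4}" using x1 unfolding p1_char by blast
  obtain c2 where c2: "X2 = gen c2" "supp_in c2 {Gb1, Gb2}" using x2 unfolding p2_char by blast
  obtain c3 where c3: "X3 = gen c3" "supp_in c3 {Gc1, Gc2, Gc3, Gc4}" using x3 unfolding p3_char by blast
  note c = c1(1) c1(2) c2(1) c2(2) c3(1) c3(2)
  note s12 = sum_gen[OF c(2) c(4)]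
  note s123 = sum_gen[OF s12(2) c(6)]
  show "\<exists>c. X = gen c \<and> supp_in c PI" using X c s12 s123
    by (intro exI[of _ "\<lambda>k. c1 k + c2 k + c3 k"]) (simp add: PI_def insert_commute)
next
  assume "\<exists>c. X = gen c \<and> supp_in c PI"
  then obtain c where X: "X = gen c" and s: "supp_in c PI" by blast
  have s': "supp_in c ({Ga1, Ga2, Ga3, Ga4} \<union> ({Gb1, Gb2} \<union> {Gc1, Gc2, Gc3, Gc4}))" using s by (simp add: PI_def insert_commute)
  note sp = split_gen[OF s']
  note sp2 = split_gen[OF sp(3)]
  have a1: "gen (\<lambda>k. if k \<in> {Ga1, Ga2, Ga3, Ga4} then c k else 0) \<in> p1" unfolding p1_char using sp(2) by blast
  have a2: "gen (\<lambda>k. if k \<in> {Gb1, Gb2} then (if k \<in> {Ga1, Ga2, Ga3, Ga4} then 0 else c k) else 0) \<in> p2"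
    unfolding p2_char using sp2(2) by blast
  have a3: "gen (\<lambda>k. if k \<in> {Gb1, Gb2} then 0 else (if k \<in> {Ga1, Ga2, Ga3, Ga4} then 0 else c k)) \<in> p3"
    unfolding p3_char using sp2(3) by blast
  have "X = gen (\<lambda>k. if k \<in> {Ga1, Ga2, Ga3, Ga4} then c k else 0) + gen (\<lambda>k. if k \<in> {Gb1, Gb2} then (if k \<in> {Ga1, Ga2, Ga3, Ga4} then 0 else c k) else 0)
     + gen (\<lambda>k. if k \<in> {Gb1, Gb2} then 0 else (if k \<in> {Ga1, Ga2, Ga3, Ga4} then 0 else c k))"
    unfolding X sp(1) sp2(1) by (simp only: add.assoc)
  then show "X \<in> pspace" unfolding pspace_def using a1 a2 a3 by blast
qed

lemma co_sum: "co k (\<Sum>X\<in>B. u X *\<^sub>R X) = (\<Sum>X\<in>B. u X * co k X)"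
  by (simp add: co_def inner_sum_left sum_divide_distrib)

lemma co_scale: "co k (r *\<^sub>R X) = r * co k X"
  by (simp add: co_def)

lemma gen_PI: assumes "supp_in c PI" shows "gen c = (\<Sum>k\<in>PI. c k *\<^sub>R E k)"
proof -
  have "gen c = (\<Sum>k\<in>UNIV. c k *\<^sub>R E k)" by (rule gen_sum)
  also have "\<dots> = (\<Sum>k\<in>PI. c k *\<^sub>R E k)"
    by (rule sum.mono_neutral_right) (use assms in \<open>auto simp: supp_in_def\<close>)
  finally show ?thesis .
qed

lemma pspace_exp: assumes "X \<in> pspace" shows "X = (\<Sum>k\<in>PI. co k X *\<^sub>R E k)"
proof -
  obtain c where X: "X = gen c" and s: "supp_in c PI" using assms by (auto simp: pspace_char)
  show ?thesis unfolding X co_gen by (rule gen_PI[OF s])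
qed

lemma E_pspace: "k \<in> PI \<Longrightarrow> r *\<^sub>R E k \<in> pspace"
  unfolding pspace_char gen_ind[symmetric] by (auto simp: supp_in_def)

definition rr :: "real \<Rightarrow> real \<Rightarrow> real \<Rightarrow> gi \<Rightarrow> real" where
  "rr r1 r2 r3 k = (if k \<in> {Ga1, Ga2, Ga3, Ga4} then r1 else if k \<in> {Gb1, Gb2} then r2 else r3)"

definition wt :: "real \<Rightarrow> real \<Rightarrow> real \<Rightarrow> gi \<Rightarrow> real" where
  "wt r1 r2 r3 k = 4 * nE k / (rr r1 r2 r3 k)^2"

lemma wt_pos: "r1 > 0 \<Longrightarrow> r2 > 0 \<Longrightarrow> r3 > 0 \<Longrightarrow> wt r1 r2 r3 k > 0"
  using nE_pos[of k] by (auto simp: wt_def rr_def)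

lemma gr_key:
  assumes r: "r1 \<noteq> 0" "r2 \<noteq> 0" "r3 \<noteq> 0"
    and X: "X1 \<in> p1" "X2 \<in> p2" "X3 \<in> p3" and Y: "Y1 \<in> p1" "Y2 \<in> p2" "Y3 \<in> p3"
  shows "kip X1 Y1 / r1^2 + kip X2 Y2 / r2^2 + kip X3 Y3 / r3^2
       = (\<Sum>k\<in>PI. wt r1 r2 r3 k * co k (X1 + X2 + X3) * co k (Y1 + Y2 + Y3))"
proof -
  obtain a1 where a1: "X1 = gen a1" "supp_in a1 {Ga1, Ga2, Ga3, Ga4}" using X(1) by (auto simp: p1_char)
  obtain a2 where a2: "X2 = gen a2" "supp_in a2 {Gb1, Gb2}" using X(2) by (auto simp: p2_char)
  obtain a3 where a3: "X3 = gen a3" "supp_in a3 {Gc1, Gc2, Gc3, Gc4}" using X(3) by (auto simp: p3_char)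
  obtain b1 where b1: "Y1 = gen b1" "supp_in b1 {Ga1, Ga2, Ga3, Ga4}" using Y(1) by (auto simp: p1_char)
  obtain b2 where b2: "Y2 = gen b2" "supp_in b2 {Gb1, Gb2}" using Y(2) by (auto simp: p2_char)
  obtain b3 where b3: "Y3 = gen b3" "supp_in b3 {Gc1, Gc2, Gc3, Gc4}" using Y(3) by (auto simp: p3_char)
  note z = supp_zero[OF a1(2)] supp_zero[OF a2(2)] supp_zero[OF a3(2)] supp_zero[OF b1(2)] supp_zero[OF b2(2)] supp_zero[OF b3(2)]
  show ?thesis unfolding a1(1) a2(1) a3(1) b1(1) b2(1) b3(1) gen_add co_gen kip_gen sum_gi
    using r by (simp add: z PI_def wt_def rr_def nE_def field_simps)
qed

lemma gr_eq:
  assumes r: "r1 \<noteq> 0" "r2 \<noteq> 0" "r3 \<noteq> 0" and X: "X \<in> pspace" and Y: "Y \<in> pspace"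
  shows "gr r1 r2 r3 X Y = (\<Sum>k\<in>PI. wt r1 r2 r3 k * co k X * co k Y)"
  unfolding gr_def
proof (rule the_equality)
  obtain X1 X2 X3 where XX: "X1 \<in> p1" "X2 \<in> p2" "X3 \<in> p3" "X = X1 + X2 + X3" using X unfolding pspace_def by blast
  obtain Y1 Y2 Y3 where YY: "Y1 \<in> p1" "Y2 \<in> p2" "Y3 \<in> p3" "Y = Y1 + Y2 + Y3" using Y unfolding pspace_def by blast
  have "(\<Sum>k\<in>PI. wt r1 r2 r3 k * co k X * co k Y) = kip X1 Y1 / r1^2 + kip X2 Y2 / r2^2 + kip X3 Y3 / r3^2"
    unfolding XX(4) YY(4) by (rule gr_key[OF r XX(1-3) YY(1-3), symmetric])
  then show "\<exists>X1 X2 X3 Y1 Y2 Y3.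
      X1 \<in> p1 \<and> X2 \<in> p2 \<and> X3 \<in> p3 \<and> Y1 \<in> p1 \<and> Y2 \<in> p2 \<and> Y3 \<in> p3 \<and>
      X = X1 + X2 + X3 \<and> Y = Y1 + Y2 + Y3 \<and>
      (\<Sum>k\<in>PI. wt r1 r2 r3 k * co k X * co k Y) = kip X1 Y1 / r1^2 + kip X2 Y2 / r2^2 + kip X3 Y3 / r3^2"
    using XX YY by blast
next
  fix c assume "\<exists>X1 X2 X3 Y1 Y2 Y3.
      X1 \<in> p1 \<and> X2 \<in> p2 \<and> X3 \<in> p3 \<and> Y1 \<in> p1 \<and> Y2 \<in> p2 \<and> Y3 \<in> p3 \<and>
      X = X1 + X2 + X3 \<and> Y = Y1 + Y2 + Y3 \<and>
      c = kip X1 Y1 / r1^2 + kip X2 Y2 / r2^2 + kip X3 Y3 / r3^2"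
  then obtain X1 X2 X3 Y1 Y2 Y3 where XX: "X1 \<in> p1" "X2 \<in> p2" "X3 \<in> p3" "Y1 \<in> p1" "Y2 \<in> p2" "Y3 \<in> p3"
    "X = X1 + X2 + X3" "Y = Y1 + Y2 + Y3" "c = kip X1 Y1 / r1^2 + kip X2 Y2 / r2^2 + kip X3 Y3 / r3^2" by blast
  show "c = (\<Sum>k\<in>PI. wt r1 r2 r3 k * co k X * co k Y)"
    unfolding XX(7-9) by (rule gr_key[OF r XX(1-6)])
qed


lemma onb_orth:
  assumes r: "r1 > 0" "r2 > 0" "r3 > 0" and B: "gr_onb r1 r2 r3 B" and k: "k \<in> PI" and l: "l \<in> PI"
  shows "(\<Sum>X\<in>B. co k X * co l X) = (if k = l then 1 / wt r1 r2 r3 l else 0)"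
proof -
  have r0: "r1 \<noteq> 0" "r2 \<noteq> 0" "r3 \<noteq> 0" using r by auto
  have fin: "finite B" and sub: "B \<subseteq> pspace" and sp: "span B = span pspace"
    and on: "\<And>X Y. X \<in> B \<Longrightarrow> Y \<in> B \<Longrightarrow> gr r1 r2 r3 X Y = (if X = Y then 1 else 0)"
    using B unfolding gr_onb_def by auto
  have El: "E l \<in> pspace" using E_pspace[OF l, of 1] by simp
  then have "E l \<in> span B" using sp span_base[of "E l" pspace] by simp
  then obtain u where u: "E l = (\<Sum>X\<in>B. u X *\<^sub>R X)" using span_finite[OF fin] by auto
  have uY: "u Y = wt r1 r2 r3 l * co l Y" if Y: "Y \<in> B" for Y
  proof -
    have YP: "Y \<in> pspace" using Y sub by auto
    have "gr r1 r2 r3 (E l) Y = (\<Sum>m\<in>PI. wt r1 r2 r3 m * co m (E l) * co m Y)"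
      by (rule gr_eq[OF r0 El YP])
    also have "\<dots> = (\<Sum>m\<in>PI. if m = l then wt r1 r2 r3 l * co l Y else 0)"
      by (rule sum.cong) (auto simp: co_E)
    also have "\<dots> = wt r1 r2 r3 l * co l Y" using l by (simp add: PI_def)
    finally have 1: "gr r1 r2 r3 (E l) Y = wt r1 r2 r3 l * co l Y" .
    have "gr r1 r2 r3 (E l) Y = (\<Sum>m\<in>PI. wt r1 r2 r3 m * (\<Sum>X\<in>B. u X * co m X) * co m Y)"
      using gr_eq[OF r0 El YP] u co_sum by simp
    also have "\<dots> = (\<Sum>X\<in>B. u X * (\<Sum>m\<in>PI. wt r1 r2 r3 m * co m X * co m Y))"
      by (simp add: sum_distrib_left sum_distrib_right mult_ac sum.swap[of _ PI B])
    also have "\<dots> = (\<Sum>X\<in>B. u X * gr r1 r2 r3 X Y)"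
      by (rule sum.cong) (use sub YP in \<open>auto simp: gr_eq[OF r0]\<close>)
    also have "\<dots> = (\<Sum>X\<in>B. if X = Y then u Y else 0)"
      by (rule sum.cong) (auto simp: on Y)
    also have "\<dots> = u Y" using fin Y by simp
    finally show ?thesis using 1 by simp
  qed
  have "co k (E l) = (\<Sum>X\<in>B. u X * co k X)" by (subst u) (rule co_sum)
  also have "\<dots> = wt r1 r2 r3 l * (\<Sum>X\<in>B. co k X * co l X)"
    by (simp add: sum_distrib_left uY mult_ac cong: sum.cong)
  finally have "wt r1 r2 r3 l * (\<Sum>X\<in>B. co k X * co l X) = (if k = l then 1 else 0)" by (simp add: co_E)
  moreover have "wt r1 r2 r3 l > 0" using wt_pos[OF r] by blast
  ultimately show ?thesis by (auto simp: field_simps)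
qed

lemma lin_comb: assumes "linear f" shows "f (\<Sum>k\<in>S. c k *\<^sub>R v k) = (\<Sum>k\<in>S. c k *\<^sub>R f (v k))"
  by (simp add: linear_sum[OF assms] linear_scale[OF assms])

lemma onb_sum:
  fixes Q :: "mat7 \<Rightarrow> mat7 \<Rightarrow> 'v::real_vector"
  assumes r: "r1 > 0" "r2 > 0" "r3 > 0" and B: "gr_onb r1 r2 r3 B"
    and l1: "\<And>Z. linear (\<lambda>X. Q X Z)" and l2: "\<And>X. linear (Q X)"
  shows "(\<Sum>X\<in>B. Q X X) = (\<Sum>k\<in>PI. (1 / wt r1 r2 r3 k) *\<^sub>R Q (E k) (E k))"
proof -
  have fin: "finite B" and sub: "B \<subseteq> pspace" using B unfolding gr_onb_def by auto
  have QX: "Q X X = (\<Sum>k\<in>PI. \<Sum>l\<in>PI. (co k X * co l X) *\<^sub>R Q (E k) (E l))" if X: "X \<in> pspace" for X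
  proof -
    have e: "X = (\<Sum>k\<in>PI. co k X *\<^sub>R E k)" by (rule pspace_exp[OF X])
    have "Q X X = Q (\<Sum>k\<in>PI. co k X *\<^sub>R E k) X" using e by simp
    also have "\<dots> = (\<Sum>k\<in>PI. co k X *\<^sub>R Q (E k) X)"
      by (rule lin_comb[OF l1[of X]])
    also have "\<dots> = (\<Sum>k\<in>PI. co k X *\<^sub>R Q (E k) (\<Sum>l\<in>PI. co l X *\<^sub>R E l))" using e by simp
    also have "\<dots> = (\<Sum>k\<in>PI. \<Sum>l\<in>PI. (co k X * co l X) *\<^sub>R Q (E k) (E l))"
      by (simp add: lin_comb[OF l2] scaleR_sum_right)
    finally show ?thesis .
  qed
  have "(\<Sum>X\<in>B. Q X X) = (\<Sum>X\<in>B. \<Sum>k\<in>PI. \<Sum>l\<in>PI. (co k X * co l X) *\<^sub>R Q (E k) (E l))"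
    by (rule sum.cong) (use sub QX in auto)
  also have "\<dots> = (\<Sum>k\<in>PI. \<Sum>l\<in>PI. (\<Sum>X\<in>B. co k X * co l X) *\<^sub>R Q (E k) (E l))"
    by (simp add: sum.swap[of _ B] scaleR_sum_left)
  also have "\<dots> = (\<Sum>k\<in>PI. \<Sum>l\<in>PI. (if k = l then 1 / wt r1 r2 r3 l else 0) *\<^sub>R Q (E k) (E l))"
    by (intro sum.cong refl) (simp add: onb_orth[OF r B])
  also have "\<dots> = (\<Sum>k\<in>PI. (1 / wt r1 r2 r3 k) *\<^sub>R Q (E k) (E k))"
  proof (rule sum.cong[OF refl])
    fix k assume k: "k \<in> PI"
    have finPI: "finite PI" by (simp add: PI_def)
    have "(\<Sum>l\<in>PI. (if k = l then 1 / wt r1 r2 r3 l else 0) *\<^sub>R Q (E k) (E l))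
        = (\<Sum>l\<in>PI. if k = l then (1 / wt r1 r2 r3 k) *\<^sub>R Q (E k) (E k) else 0)"
      by (rule sum.cong) auto
    also have "\<dots> = (1 / wt r1 r2 r3 k) *\<^sub>R Q (E k) (E k)" using k finPI by simp
    finally show "(\<Sum>l\<in>PI. (if k = l then 1 / wt r1 r2 r3 l else 0) *\<^sub>R Q (E k) (E l))
        = (1 / wt r1 r2 r3 k) *\<^sub>R Q (E k) (E k)" .
  qed
  finally show ?thesis .
qed

lemma onb_ex:
  assumes r: "r1 > 0" "r2 > 0" "r3 > 0"
  shows "\<exists>B. gr_onb r1 r2 r3 B"
proof -
  have r0: "r1 \<noteq> 0" "r2 \<noteq> 0" "r3 \<noteq> 0" using r by auto
  define s where "s = (\<lambda>k. 1 / sqrt (wt r1 r2 r3 k))"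
  have wp: "wt r1 r2 r3 k > 0" for k using wt_pos[OF r] by blast
  have sp: "s k > 0" for k using wp[of k] by (simp add: s_def)
  have sne: "s k \<noteq> 0" for k using sp[of k] by simp
  define F where "F = (\<lambda>k. s k *\<^sub>R E k)"
  let ?B = "F ` PI"
  have coF: "co m (F k) = (if m = k then s k else 0)" for m k by (simp add: F_def co_scale co_E)
  have FP: "F k \<in> pspace" if "k \<in> PI" for k unfolding F_def by (rule E_pspace[OF that])
  have BP: "?B \<subseteq> pspace" using FP by auto
  have PB: "pspace \<subseteq> span ?B"
  proof
    fix X assume X: "X \<in> pspace"
    have "X = (\<Sum>k\<in>PI. co k X *\<^sub>R E k)" by (rule pspace_exp[OF X])
    also have "\<dots> = (\<Sum>k\<in>PI. (co k X / s k) *\<^sub>R F k)"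
      by (rule sum.cong[OF refl]) (simp add: F_def sne)
    also have "\<dots> \<in> span ?B" by (intro span_sum span_scale span_base) auto
    finally show "X \<in> span ?B" .
  qed
  have spanB: "span ?B = span pspace"
  proof
    show "span ?B \<subseteq> span pspace" using BP by (rule span_mono)
    show "span pspace \<subseteq> span ?B" using PB by (simp add: span_minimal)
  qed
  have gF: "gr r1 r2 r3 (F k) (F l) = (if F k = F l then 1 else 0)" if k: "k \<in> PI" and l: "l \<in> PI" for k l
  proof -
    have "gr r1 r2 r3 (F k) (F l) = (\<Sum>m\<in>PI. wt r1 r2 r3 m * co m (F k) * co m (F l))"
      by (rule gr_eq[OF r0 FP[OF k] FP[OF l]])
    also have "\<dots> = (\<Sum>m\<in>PI. if m = k then (if k = l then wt r1 r2 r3 k * s k * s k else 0) else 0)"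
      by (rule sum.cong) (auto simp: coF)
    also have "\<dots> = (if k = l then 1 else 0)"
      using k wp[of k] wp[of l] by (simp add: s_def PI_def abs_of_pos)
    also have "\<dots> = (if F k = F l then 1 else 0)"
    proof -
      have "F k = F l \<longleftrightarrow> k = l"
      proof
        assume "F k = F l"
        then have "co k (F k) = co k (F l)" by simp
        then show "k = l" using sp[of k] by (simp add: coF split: if_splits)
      qed simp
      then show ?thesis by simp
    qed
    finally show ?thesis .
  qed
  have "gr_onb r1 r2 r3 ?B"
    unfolding gr_onb_def using BP spanB gF by (auto simp: PI_def)
  then show ?thesis by blast
qed

lemma lap_formula:
  fixes \<pi> :: "mat7 \<Rightarrow> 'v \<Rightarrow> 'v::real_vector"
  assumes r: "r1 > 0" "r2 > 0" "r3 > 0"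
    and l1: "\<And>w. linear (\<lambda>X. \<pi> X w)" and l2: "\<And>X. linear (\<pi> X)"
  shows "lap_op r1 r2 r3 \<pi> v = - (\<Sum>k\<in>PI. (1 / wt r1 r2 r3 k) *\<^sub>R \<pi> (E k) (\<pi> (E k) v))"
proof -
  have B: "gr_onb r1 r2 r3 (SOME B. gr_onb r1 r2 r3 B)" using onb_ex[OF r] by (rule someI_ex)
  have "(\<Sum>X\<in>(SOME B. gr_onb r1 r2 r3 B). \<pi> X (\<pi> X v)) = (\<Sum>k\<in>PI. (1 / wt r1 r2 r3 k) *\<^sub>R \<pi> (E k) (\<pi> (E k) v))"
  proof (rule onb_sum[OF r B, where Q = "\<lambda>X Y. \<pi> X (\<pi> Y v)"])
    show "linear (\<lambda>X. \<pi> X (\<pi> Z v))" for Z by (rule l1)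
    show "linear (\<lambda>Y. \<pi> X (\<pi> Y v))" for X
      using linear_compose[OF l1[of v] l2[of X]] by (simp add: comp_def)
  qed
  then show ?thesis unfolding lap_op_def by simp
qed

lemma linear_std1: "linear (\<lambda>X. pi_std X w)"
  by (rule linearI) (simp_all add: pi_std_def matrix_vector_mult_add_rdistrib scaleR_matrix_vector_assoc)

lemma linear_std2: "linear (pi_std X)"
  unfolding pi_std_def by (rule matrix_vector_mul_linear)

lemma linear_ad1: "linear (\<lambda>X. pi_ad X w)"
  by (rule linearI) (simp_all add: pi_ad_def lbr_def matrix_add_rdistrib7 matrix_add_ldistrib matrix_scalar_ac scalar_matrix_assoc algebra_simps)

lemma linear_ad2: "linear (pi_ad X)"
  unfolding pi_ad_def by (rule linear_lbr)


lemma sk_uminus: "- sk x01 x02 x03 x04 x05 x06 x12 x13 x14 x15 x16 x23 x24 x25 x26 x34 x35 x36 x45 x46 x56 = sk (- x01) (- x02) (- x03) (- x04) (- x05) (- x06) (- x12) (- x13) (- x14) (- x15) (- x16) (- x23) (- x24) (- x25) (- x26) (- x34) (- x35) (- x36) (- x45) (- x46) (- x56)"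
  unfolding mat7_eq all_i7 by simp

lemma po_E: "pairwise orthogonal (range E)"
  by (auto simp: pairwise_def orthogonal_def inner_E)

lemma nz_E: "0 \<notin> range E"
proof
  assume "0 \<in> range E" then obtain k where "E k = 0" by auto
  then have "inner (E k) (E k) = 0" by simp
  then show False using nE_pos[of k] by (simp add: inner_E)
qed

lemma dim_g2: "dim g2 = 14"
proof -
  have "independent (range E)" by (rule pairwise_orthogonal_independent[OF po_E nz_E])
  then have "dim (span (range E)) = card (range E)" by (rule dim_span_eq_card_independent)
  moreover have "card (range E) = 14" using card_image[OF inj_E] by (simp add: UNIV_gi)
  ultimately show ?thesis by (simp add: g2_span[symmetric])
qed

lemma dim_vec7: "dim (UNIV :: vec7 set) = 7"
  by (simp add: UNIV_i7)

lemma zero_rootH: "0 \<in> rootsp 1 1 (-2)"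
  unfolding rootsp_H by (intro exI[of _ "\<lambda>_. 0"]) (simp add: gen_zero supp_in_def)

lemma tor_hlie: "tor 1 2 (-3) \<in> hlie"
proof -
  have "tor 1 2 (-3) \<in> tset" unfolding tset_def
    by (rule CollectI, rule exI[of _ 1], rule exI[of _ 2], rule exI[of _ "-3"]) simp
  moreover have "tor 1 2 (-3) = tor 1 2 (-3) + 0" by simp
  ultimately show ?thesis unfolding hlie_def using zero_rootH by blast
qed

lemma Eh1_hlie: "E Gh1 \<in> hlie"
proof -
  have "tor 0 0 0 \<in> tset" unfolding tset_def
    by (rule CollectI, rule exI[of _ 0], rule exI[of _ 0], rule exI[of _ 0]) simp
  moreover have "E Gh1 = tor 0 0 0 + E Gh1" by (simp add: tor_sk sk_zero[symmetric])
  moreover have "E Gh1 \<in> rootsp 1 1 (-2)" unfolding rootsp_H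
    by (intro exI[of _ "\<lambda>j. if j = Gh1 then 1 else 0"]) (simp add: gen_ind supp_in_def)
  ultimately show ?thesis unfolding hlie_def by blast
qed

lemma hlie_elim:
  assumes "X \<in> hlie"
  obtains e1 e2 e3 c where "e1 + e2 + e3 = 0" "X = tor e1 e2 e3 + gen c" "supp_in c {Gh1, Gh2}"
  using assms unfolding hlie_def tset_def rootsp_H by blast

lemma fixH_std: "v \<in> fixH pi_std UNIV \<longleftrightarrow> (v$I1 = 0 \<and> v$I2 = 0 \<and> v$I3 = 0 \<and> v$I4 = 0 \<and> v$I5 = 0 \<and> v$I6 = 0)"
proof
  assume "v \<in> fixH pi_std UNIV"
  then have "pi_std (tor 1 2 (-3)) v = 0" using tor_hlie by (simp add: fixH_def)
  then show "v$I1 = 0 \<and> v$I2 = 0 \<and> v$I3 = 0 \<and> v$I4 = 0 \<and> v$I5 = 0 \<and> v$I6 = 0"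
    by (simp add: pi_std_def tor_sk vec_eq_iff all_i7)
next
  assume v: "v$I1 = 0 \<and> v$I2 = 0 \<and> v$I3 = 0 \<and> v$I4 = 0 \<and> v$I5 = 0 \<and> v$I6 = 0"
  have "pi_std X v = 0" if X: "X \<in> hlie" for X
  proof -
    obtain e1 e2 e3 c where X: "X = tor e1 e2 e3 + gen c" and s: "supp_in c {Gh1, Gh2}" using hlie_elim[OF X] by blast
    note z = supp_zero[OF s]
    show ?thesis using v unfolding X pi_std_def
      by (simp add: matrix_vector_mult_add_rdistrib tor_sk gen_def vec_eq_iff all_i7 z)
  qed
  then show "v \<in> fixH pi_std UNIV" by (simp add: fixH_def)
qed

lemma fixH_std_span: "fixH pi_std UNIV = span {axis I0 1}"
proof -
  have "fixH pi_std UNIV = range (\<lambda>k. k *\<^sub>R (axis I0 1 :: vec7))"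
  proof (rule set_eqI)
    fix v :: vec7
    show "v \<in> fixH pi_std UNIV \<longleftrightarrow> v \<in> range (\<lambda>k. k *\<^sub>R axis I0 1)"
    proof
      assume "v \<in> fixH pi_std UNIV"
      then have "v = (v$I0) *\<^sub>R axis I0 1" unfolding fixH_std by (simp add: vec_eq_iff all_i7 axis_def)
      then show "v \<in> range (\<lambda>k. k *\<^sub>R axis I0 1)" by blast
    next
      assume "v \<in> range (\<lambda>k. k *\<^sub>R axis I0 1)"
      then show "v \<in> fixH pi_std UNIV" unfolding fixH_std by (auto simp: axis_def)
    qed
  qed
  then show ?thesis by (simp add: span_singleton)
qed

lemma fixH_ad: "Y \<in> fixH pi_ad g2 \<longleftrightarrow> (\<exists>s. Y = s *\<^sub>R E Gt2)"
proof
  assume Y: "Y \<in> fixH pi_ad g2"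
  then have Yg: "Y \<in> g2" by (simp add: fixH_def)
  define c where "c = (\<lambda>k. co k Y)"
  have g: "Y = gen c" unfolding c_def by (rule g2_gen[OF Yg])
  have h1: "lbr (tor 1 2 (-3)) (gen c) = 0" using Y tor_hlie g by (simp add: fixH_def pi_ad_def)
  have h2: "lbr (E Gh1) (gen c) = 0" using Y Eh1_hlie g by (simp add: fixH_def pi_ad_def)
  have "\<forall>k. k \<noteq> Gt2 \<longrightarrow> c k = 0" using h1 h2 unfolding gen_def tor_sk E_Gh1
    by (simp add: all_gi lbr_sk sk_zero sk_eq, (elim conjE)?, (intro conjI)?, (linarith+)?)
  then have "c = (\<lambda>j. if j = Gt2 then c Gt2 else 0)" by auto
  then have "Y = c Gt2 *\<^sub>R E Gt2" using g gen_ind by metis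
  then show "\<exists>s. Y = s *\<^sub>R E Gt2" by blast
next
  assume "\<exists>s. Y = s *\<^sub>R E Gt2"
  then obtain s where Y: "Y = s *\<^sub>R E Gt2" by blast
  have "Y \<in> g2" unfolding Y by (rule subspace_scale[OF subspace_g2 E_g2])
  moreover have "pi_ad X Y = 0" if X: "X \<in> hlie" for X
  proof -
    obtain e1 e2 e3 c where X: "X = tor e1 e2 e3 + gen c" and s: "supp_in c {Gh1, Gh2}" using hlie_elim[OF X] by blast
    note z = supp_zero[OF s]
    show ?thesis unfolding X Y pi_ad_def tor_sk gen_def E_Gt2
      by (simp add: z sk_scale sk_add lbr_sk sk_zero[symmetric] sk_eq algebra_simps)
  qed
  ultimately show "Y \<in> fixH pi_ad g2" by (simp add: fixH_def)
qed

lemma fixH_ad_span: "fixH pi_ad g2 = span {E Gt2}"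
  unfolding span_singleton using fixH_ad by blast

lemma E_Gt2_nz: "E Gt2 \<noteq> 0"
  using nz_E by auto

lemma lap_std:
  assumes r: "r1 > 0" "r2 > 0" "r3 > 0" and v: "v \<in> fixH pi_std UNIV"
  shows "lap_op r1 r2 r3 pi_std v = (r1^2 / 3 + r2^2 / 6) *\<^sub>R v"
proof -
  have vz: "v$I1 = 0" "v$I2 = 0" "v$I3 = 0" "v$I4 = 0" "v$I5 = 0" "v$I6 = 0" using v unfolding fixH_std by auto
  have "lap_op r1 r2 r3 pi_std v = - (\<Sum>k\<in>PI. (1 / wt r1 r2 r3 k) *\<^sub>R (E k *v (E k *v v)))"
    by (simp add: lap_formula[OF r linear_std1 linear_std2] pi_std_def)
  also have "\<dots> = (r1^2 / 3 + r2^2 / 6) *\<^sub>R v"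
    using r by (simp add: PI_def vec_eq_iff all_i7 E_simps vz wt_def rr_def nE_def field_simps)
  finally show ?thesis .
qed

lemma lap_ad:
  assumes r: "r1 > 0" "r2 > 0" "r3 > 0" and Y: "Y \<in> fixH pi_ad g2"
  shows "lap_op r1 r2 r3 pi_ad Y = (r1^2 / 12 + r2^2 / 6 + 3 * r3^2 / 4) *\<^sub>R Y"
proof -
  obtain s where Ys: "Y = s *\<^sub>R E Gt2" using Y unfolding fixH_ad by blast
  have "lap_op r1 r2 r3 pi_ad Y = - (\<Sum>k\<in>PI. (1 / wt r1 r2 r3 k) *\<^sub>R lbr (E k) (lbr (E k) Y))"
    by (simp add: lap_formula[OF r linear_ad1 linear_ad2] pi_ad_def)
  also have "\<dots> = (r1^2 / 12 + r2^2 / 6 + 3 * r3^2 / 4) *\<^sub>R Y"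
    using r unfolding Ys by (simp add: PI_def E_simps sk_scale lbr_sk sk_add sk_uminus sk_eq wt_def rr_def nE_def field_simps)
  finally show ?thesis .
qed


theorem mainTheorem2:
  fixes r1 r2 r3 :: real
  assumes "r1 > 0" and "r2 > 0" and "r3 > 0"
  shows "dim (UNIV :: vec7 set) = 7 \<and> dim g2 = 14
    \<and> dim (fixH pi_std UNIV) = 1 \<and> dim (fixH pi_ad g2) = 1
    \<and> (\<forall>v \<in> fixH pi_std UNIV. lap_op r1 r2 r3 pi_std v = (r1^2 / 3 + r2^2 / 6) *\<^sub>R v)
    \<and> (\<forall>Y \<in> fixH pi_ad g2.
         lap_op r1 r2 r3 pi_ad Y = (r1^2 / 12 + r2^2 / 6 + 3 * r3^2 / 4) *\<^sub>R Y)"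
proof -
  have ax: "(axis I0 1 :: vec7) \<noteq> 0" by (simp add: vec_eq_iff axis_def)
  have d1: "dim (fixH pi_std UNIV) = 1" unfolding fixH_std_span using ax by simp
  have d2: "dim (fixH pi_ad g2) = 1" unfolding fixH_ad_span using E_Gt2_nz by simp
  show ?thesis using dim_vec7 dim_g2 d1 d2 lap_std[OF assms] lap_ad[OF assms] by blast
qed

end
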